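(* Let $\mathcal{R}$ be a left-linear almost parallel closed TRS. If $t \;{}_{\mathcal{R}}\!\overset{P_1}{\Leftarrow}\; s \overset{P_2}{\Rightarrow}_\mathcal{R} u$, then (i) there exist $v_1$ and a set $P_1'$ of pairwise parallel positions with $t \to_\mathcal{R}^* v_1$, $u \overset{P_1'}{\Rightarrow}_\mathcal{R} v_1$ and $\mathcal{V}ar(v_1,P_1')\subseteq\mathcal{V}ar(s,P_1)$; and (ii) there exist $v_2$ and a set $P_2'$ of pairwise parallel positions with $t \overset{P_2'}{\Rightarrow}_\mathcal{R} v_2$, $u\to_\mathcal{R}^* v_2$ and $\mathcal{V}ar(v_2,P_2')\subseteq\mathcal{V}ar(s,P_2)$.
   Context: Terms over signature $\mathcal{F}$ and variables $\mathcal{V}$; a TRS is a set of rules $\ell\to r$ with $\ell\notin\mathcal{V}$, $\mathcal{V}ar(r)\subseteq\mathcal{V}ar(\ell)$; left-linear means no variable occurs twice in any left-hand side. Positions are sequences of positive integers, $\epsilon$ the root; $p,q$ are parallel if neither is a prefix of the other; $\mathcal{P}os_\mathcal{F}(t)$ are the function-symbol positions of $t$. Parallel step: for a set $P$ of pairwise parallel positions of $s$, $s \overset{P}{\Rightarrow}_\mathcal{R} t$ iff for every $p\in P$ there are a rule $\ell\to r\in\mathcal{R}$ and substitution $\mu$ with $s|_p=\ell\mu$, $t|_p=r\mu$, and $t=s[t|_p]_{p\in P}$; $s\Rightarrow_\mathcal{R}t$ if this holds for some $P$; $t\;{}_{\mathcal{R}}\!\overset{P}{\Leftarrow}\;s$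 means $s\overset{P}{\Rightarrow}_\mathcal{R}t$. $\mathcal{V}ar(t,P)=\bigcup_{p\in P}\mathcal{V}ar(t|_p)$. Critical peak: if $\ell_1\to r_1$ and $\ell_2\to r_2$ are variants (renamings) of rules of $\mathcal{R}$ with no common variables, $p\in\mathcal{P}os_\mathcal{F}(\ell_2)$, $\sigma$ a most general unifier of $\ell_1$ and $\ell_2|_p$, and (if $p=\epsilon$) $\ell_1\to r_1$ is not a variant of $\ell_2\to r_2$, then $(\ell_2\sigma)[r_1\sigma]_p \xleftarrow{p} \ell_2\sigma\xrightarrow{\epsilon} r_2\sigma$ is a critical peak and $((\ell_2\sigma)[r_1\sigma]_p, r_2\sigma)$ a critical pair at position $p$. $\mathcal{R}$ is almost parallel closed if every critical pair $(t,u)$ at position $p=\epsilon$ satisfies $t\Rightarrow_\mathcal{R}\cdot\leftarrow_\mathcal{R}^* u$ (i.e. $t\Rightarrow_\mathcal{R} w$ and $u\to^*_\mathcal{R} w$ for some $w$), and every critical pair $(t,u)$ at a position $p\neq\epsilon$ satisfies $t\Rightarrow_\mathcal{R} u$. *)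

theory Defs
  imports Main "HOL-Library.Sublist"
begin

datatype ('f, 'v) "term" = Var 'v | Fun 'f "('f, 'v) term list"

type_synonym pos = "nat list"
type_synonym ('f, 'v) rule = "('f, 'v) term \<times> ('f, 'v) term"
type_synonym ('f, 'v) trs = "('f, 'v) rule set"
type_synonym ('f, 'v) subst = "'v \<Rightarrow> ('f, 'v) term"

text \<open>Positions are lists of argument indices; argument indices are 0-based
  (index i here corresponds to the paper's positive integer i+1).\<close>

fun vars_term :: "('f, 'v) term \<Rightarrow> 'v set" where
  "vars_term (Var x) = {x}"
| "vars_term (Fun f ts) = (\<Union>t \<in> set ts. vars_term t)"

fun subst_apply :: "('f, 'v) term \<Rightarrow> ('f, 'v) subst \<Rightarrow> ('f, 'v) term" where
  "subst_apply (Var x) \<sigma> = \<sigma> x"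
| "subst_apply (Fun f ts) \<sigma> = Fun f (map (\<lambda>t. subst_apply t \<sigma>) ts)"

definition subst_compose :: "('f, 'v) subst \<Rightarrow> ('f, 'v) subst \<Rightarrow> ('f, 'v) subst" where
  "subst_compose \<sigma> \<tau> = (\<lambda>x. subst_apply (\<sigma> x) \<tau>)"

fun poss :: "('f, 'v) term \<Rightarrow> pos set" where
  "poss (Var x) = {[]}"
| "poss (Fun f ts) = insert [] (\<Union>t \<in> set ts. {i # p | i p. i < length ts \<and> ts ! i = t \<and> p \<in> poss t})"

fun funposs :: "('f, 'v) term \<Rightarrow> pos set" where
  "funposs (Var x) = {}"
| "funposs (Fun f ts) = insert [] (\<Union>t \<in> set ts. {i # p | i p. i < length ts \<and> ts ! i = t \<and> p \<in> funposs t})"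

fun subt_at :: "('f, 'v) term \<Rightarrow> pos \<Rightarrow> ('f, 'v) term" where
  "subt_at t [] = t"
| "subt_at (Fun f ts) (i # p) = subt_at (ts ! i) p"
| "subt_at (Var x) (i # p) = Var x"

fun replace_at :: "('f, 'v) term \<Rightarrow> pos \<Rightarrow> ('f, 'v) term \<Rightarrow> ('f, 'v) term" where
  "replace_at t [] s = s"
| "replace_at (Fun f ts) (i # p) s = Fun f (ts[i := replace_at (ts ! i) p s])"
| "replace_at (Var x) (i # p) s = Var x"

function par_replace :: "('f, 'v) term \<Rightarrow> pos set \<Rightarrow> (pos \<Rightarrow> ('f, 'v) term) \<Rightarrow> ('f, 'v) term" where
  "par_replace s P g =
    (if [] \<in> P then g []
     else (case s of
       Var x \<Rightarrow> Var x
     | Fun f ss \<Rightarrow> Fun f (map (\<lambda>i. par_replace (ss ! i) {q. i # q \<in> P} (\<lambda>q. g (i # q)))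
                              [0..<length ss])))"
  by pat_completeness auto
termination
  by (relation "measure (\<lambda>(s, _, _). size s)")
     (auto simp: less_Suc_eq_le intro!: size_list_estimation' nth_mem)

definition parallel_pos :: "pos \<Rightarrow> pos \<Rightarrow> bool" where
  "parallel_pos p q \<longleftrightarrow> \<not> prefix p q \<and> \<not> prefix q p"

definition pairwise_parallel :: "pos set \<Rightarrow> bool" where
  "pairwise_parallel P \<longleftrightarrow> (\<forall>p \<in> P. \<forall>q \<in> P. p \<noteq> q \<longrightarrow> parallel_pos p q)"

definition vars_at :: "('f, 'v) term \<Rightarrow> pos set \<Rightarrow> 'v set" where
  "vars_at t P = (\<Union>p \<in> P. vars_term (subt_at t p))"

definition wf_trs :: "('f, 'v) trs \<Rightarrow> bool" where
  "wf_trs R \<longleftrightarrow> (\<forall>(l, r) \<in> R. (\<forall>x. l \<noteq> Var x) \<and> vars_term r \<subseteq> vars_term l)"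

fun linear_term :: "('f, 'v) term \<Rightarrow> bool" where
  "linear_term (Var x) = True"
| "linear_term (Fun f ts) = ((\<forall>t \<in> set ts. linear_term t) \<and>
     (\<forall>i < length ts. \<forall>j < length ts. i \<noteq> j \<longrightarrow> vars_term (ts ! i) \<inter> vars_term (ts ! j) = {}))"

definition left_linear :: "('f, 'v) trs \<Rightarrow> bool" where
  "left_linear R \<longleftrightarrow> (\<forall>(l, r) \<in> R. linear_term l)"

definition rstep :: "('f, 'v) trs \<Rightarrow> (('f, 'v) term \<times> ('f, 'v) term) set" where
  "rstep R = {(s, t). \<exists>p \<in> poss s. \<exists>(l, r) \<in> R. \<exists>\<sigma>.
      subt_at s p = subst_apply l \<sigma> \<and> t = replace_at s p (subst_apply r \<sigma>)}"

definition par_step :: "('f, 'v) trs \<Rightarrow> pos set \<Rightarrow> ('f, 'v) term \<Rightarrow> ('f, 'v) term \<Rightarrow> bool" where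
  "par_step R P s t \<longleftrightarrow> P \<subseteq> poss s \<and> pairwise_parallel P \<and>
     (\<forall>p \<in> P. \<exists>(l, r) \<in> R. \<exists>\<mu>. subt_at s p = subst_apply l \<mu> \<and> subt_at t p = subst_apply r \<mu>) \<and>
     t = par_replace s P (subt_at t)"

definition is_renaming :: "('f, 'v) subst \<Rightarrow> bool" where
  "is_renaming \<rho> \<longleftrightarrow> (\<exists>\<pi>. bij \<pi> \<and> \<rho> = (\<lambda>x. Var (\<pi> x)))"

definition is_variant :: "('f, 'v) rule \<Rightarrow> ('f, 'v) rule \<Rightarrow> bool" where
  "is_variant rl rl' \<longleftrightarrow> (\<exists>\<rho>. is_renaming \<rho> \<and>
     fst rl = subst_apply (fst rl') \<rho> \<and> snd rl = subst_apply (snd rl') \<rho>)"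

definition vars_rule :: "('f, 'v) rule \<Rightarrow> 'v set" where
  "vars_rule rl = vars_term (fst rl) \<union> vars_term (snd rl)"

definition is_unifier :: "('f, 'v) subst \<Rightarrow> ('f, 'v) term \<Rightarrow> ('f, 'v) term \<Rightarrow> bool" where
  "is_unifier \<sigma> s t \<longleftrightarrow> subst_apply s \<sigma> = subst_apply t \<sigma>"

definition is_mgu :: "('f, 'v) subst \<Rightarrow> ('f, 'v) term \<Rightarrow> ('f, 'v) term \<Rightarrow> bool" where
  "is_mgu \<sigma> s t \<longleftrightarrow> is_unifier \<sigma> s t \<and>
     (\<forall>\<tau>. is_unifier \<tau> s t \<longrightarrow> (\<exists>\<delta>. \<tau> = subst_compose \<sigma> \<delta>))"

definition critical_pair :: "('f, 'v) trs \<Rightarrow> ('f, 'v) term \<Rightarrow> ('f, 'v) term \<Rightarrow> pos \<Rightarrow> bool" where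
  "critical_pair R t u p \<longleftrightarrow> (\<exists>l1 r1 l2 r2 \<sigma>.
     (\<exists>rl \<in> R. is_variant (l1, r1) rl) \<and> (\<exists>rl \<in> R. is_variant (l2, r2) rl) \<and>
     vars_rule (l1, r1) \<inter> vars_rule (l2, r2) = {} \<and>
     p \<in> funposs l2 \<and> is_mgu \<sigma> l1 (subt_at l2 p) \<and>
     (p = [] \<longrightarrow> \<not> is_variant (l1, r1) (l2, r2)) \<and>
     t = replace_at (subst_apply l2 \<sigma>) p (subst_apply r1 \<sigma>) \<and>
     u = subst_apply r2 \<sigma>)"

definition almost_parallel_closed :: "('f, 'v) trs \<Rightarrow> bool" where
  "almost_parallel_closed R \<longleftrightarrow> (\<forall>t u p. critical_pair R t u p \<longrightarrow>
     (p = [] \<longrightarrow> (\<exists>w. (\<exists>P. par_step R P t w) \<and> (u, w) \<in> (rstep R)\<^sup>*)) \<and>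
     (p \<noteq> [] \<longrightarrow> (\<exists>P. par_step R P t u)))"

end

theory Submission
  imports Defs
begin


lemma subst_subst: "subst_apply (subst_apply t \<sigma>) \<delta> = subst_apply t (subst_compose \<sigma> \<delta>)"
  by (induction t) (auto simp: subst_compose_def)

lemma vars_subst: "vars_term (subst_apply t \<sigma>) = (\<Union>x\<in>vars_term t. vars_term (\<sigma> x))"
  by (induction t) auto

lemma subst_agree: "(\<And>x. x \<in> vars_term t \<Longrightarrow> \<sigma> x = \<tau> x) \<Longrightarrow> subst_apply t \<sigma> = subst_apply t \<tau>"
  by (induction t) auto

lemma subst_eq_agree: "subst_apply t \<sigma> = subst_apply t \<tau> \<Longrightarrow> x \<in> vars_term t \<Longrightarrow> \<sigma> x = \<tau> x"
proof (induction t)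
  case (Var y) then show ?case by simp
next
  case (Fun f ts)
  then obtain t where "t \<in> set ts" "x \<in> vars_term t" by auto
  moreover have "subst_apply t \<sigma> = subst_apply t \<tau>" using Fun(2) \<open>t \<in> set ts\<close> by (simp add: map_eq_conv)
  ultimately show ?case using Fun(1) by blast
qed

lemma poss_Fun': "poss (Fun f ts) = insert [] {i # p | i p. i < length ts \<and> p \<in> poss (ts ! i)}"
  by (auto intro: nth_mem)

lemma funposs_Fun': "funposs (Fun f ts) = insert [] {i # p | i p. i < length ts \<and> p \<in> funposs (ts ! i)}"
  by (auto intro: nth_mem)

declare poss.simps(2)[simp del] funposs.simps(2)[simp del]
declare poss_Fun'[simp] funposs_Fun'[simp]

lemma poss_Fun: "i # p \<in> poss (Fun f ts) \<longleftrightarrow> i < length ts \<and> p \<in> poss (ts ! i)"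
  by auto

lemma funposs_Fun: "i # p \<in> funposs (Fun f ts) \<longleftrightarrow> i < length ts \<and> p \<in> funposs (ts ! i)"
  by auto

lemma Nil_poss[simp]: "[] \<in> poss t"
  by (cases t) auto

lemma finite_poss: "finite (poss t)"
proof (induction t)
  case (Var x) then show ?case by simp
next
  case (Fun f ts)
  have "poss (Fun f ts) \<subseteq> insert [] (\<Union>i<length ts. (\<lambda>p. i # p) ` poss (ts ! i))"
    by auto
  moreover have "finite (\<Union>i<length ts. (\<lambda>p. i # p) ` poss (ts ! i))"
    using Fun by auto
  ultimately show ?case by (meson finite_insert finite_subset)
qed

lemma funposs_poss: "p \<in> funposs t \<Longrightarrow> p \<in> poss t"
  by (induction t arbitrary: p) auto

lemma poss_subst: "p \<in> poss t \<Longrightarrow> p \<in> poss (subst_apply t \<sigma>)"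
  by (induction t arbitrary: p) auto

lemma subt_at_subst: "p \<in> poss t \<Longrightarrow> subt_at (subst_apply t \<sigma>) p = subst_apply (subt_at t p) \<sigma>"
  by (induction t arbitrary: p) auto

lemma replace_at_subst: "p \<in> poss t \<Longrightarrow>
  subst_apply (replace_at t p s) \<sigma> = replace_at (subst_apply t \<sigma>) p (subst_apply s \<sigma>)"
proof (induction t arbitrary: p)
  case (Var x) then show ?case by simp
next
  case (Fun f ts)
  show ?case
  proof (cases p)
    case Nil then show ?thesis by simp
  next
    case (Cons i q)
    with Fun have i: "i < length ts" "q \<in> poss (ts ! i)" by auto
    then show ?thesis using Fun(1)[of "ts ! i" q] Cons
      by (auto simp: map_update nth_mem)
  qed
qed

lemma vars_subt_at: "p \<in> poss t \<Longrightarrow> vars_term (subt_at t p) \<subseteq> vars_term t"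
proof (induction t p rule: subt_at.induct)
  case (2 f ts i p)
  then show ?case by (auto dest: nth_mem)
qed auto


declare par_replace.simps[simp del]

lemma par_replace_root: "[] \<in> P \<Longrightarrow> par_replace s P g = g []"
  by (subst par_replace.simps) simp

lemma par_replace_Var: "[] \<notin> P \<Longrightarrow> par_replace (Var x) P g = Var x"
  by (subst par_replace.simps) simp

lemma par_replace_Fun: "[] \<notin> P \<Longrightarrow> par_replace (Fun f ss) P g =
  Fun f (map (\<lambda>i. par_replace (ss ! i) {q. i # q \<in> P} (\<lambda>q. g (i # q))) [0..<length ss])"
  by (subst par_replace.simps) simp

lemma par_replace_empty: "par_replace s {} g = s"
proof (induction s arbitrary: g)
  case (Var x) then show ?case by (simp add: par_replace_Var)
next
  case (Fun f ss)
  then show ?case by (auto simp: par_replace_Fun nth_mem intro!: nth_equalityI)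
qed

lemma prefix_Cons_Cons: "prefix (i # p) (j # q) \<longleftrightarrow> i = j \<and> prefix p q"
  by auto

lemma parallel_Cons: "parallel_pos (i # p) (j # q) \<longleftrightarrow> i \<noteq> j \<or> parallel_pos p q"
  by (auto simp: parallel_pos_def)

lemma parallel_Nil: "\<not> parallel_pos [] p" "\<not> parallel_pos p []"
  by (auto simp: parallel_pos_def)

inductive pstep :: "('f, 'v) trs \<Rightarrow> pos set \<Rightarrow> ('f, 'v) term \<Rightarrow> ('f, 'v) term \<Rightarrow> bool"
  for R where
  pempty: "pstep R {} s s"
| proot: "(l, r) \<in> R \<Longrightarrow> pstep R {[]} (subst_apply l \<sigma>) (subst_apply r \<sigma>)"
| pcong: "length ts = length ss \<Longrightarrow> (\<forall>i < length ss. pstep R (Ps i) (ss ! i) (ts ! i)) \<Longrightarrow>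
    pstep R (\<Union>i < length ss. (\<lambda>p. i # p) ` Ps i) (Fun f ss) (Fun f ts)"

lemma par_stepD:
  assumes "par_step R P s t"
  shows "P \<subseteq> poss s" "pairwise_parallel P"
    "\<And>p. p \<in> P \<Longrightarrow> \<exists>(l, r)\<in>R. \<exists>\<mu>. subt_at s p = subst_apply l \<mu> \<and> subt_at t p = subst_apply r \<mu>"
    "t = par_replace s P (subt_at t)"
proof -
  have A: "P \<subseteq> poss s \<and> pairwise_parallel P \<and>
     (\<forall>p \<in> P. \<exists>(l, r) \<in> R. \<exists>\<mu>. subt_at s p = subst_apply l \<mu> \<and> subt_at t p = subst_apply r \<mu>) \<and>
     t = par_replace s P (subt_at t)" using assms unfolding par_step_def .
  show "P \<subseteq> poss s" by (rule conjunct1[OF A])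
  show "pairwise_parallel P" by (rule conjunct1[OF conjunct2[OF A]])
  show "t = par_replace s P (subt_at t)" by (rule conjunct2[OF conjunct2[OF conjunct2[OF A]]])
  fix p assume "p \<in> P"
  with conjunct1[OF conjunct2[OF conjunct2[OF A]]]
  show "\<exists>(l, r)\<in>R. \<exists>\<mu>. subt_at s p = subst_apply l \<mu> \<and> subt_at t p = subst_apply r \<mu>" by (rule bspec)
qed

lemma pstep_par: "pstep R P s t \<Longrightarrow> par_step R P s t"
proof (induction rule: pstep.induct)
  case (pempty s)
  then show ?case by (simp add: par_step_def pairwise_parallel_def par_replace_empty)
next
  case (proot l r \<sigma>)
  show ?case unfolding par_step_def
  proof (intro conjI)
    show "{[]} \<subseteq> poss (subst_apply l \<sigma>)" by simp
    show "pairwise_parallel {[]}" by (simp add: pairwise_parallel_def)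
    show "\<forall>p\<in>{[]}. \<exists>(l', r')\<in>R. \<exists>\<mu>. subt_at (subst_apply l \<sigma>) p = subst_apply l' \<mu> \<and> subt_at (subst_apply r \<sigma>) p = subst_apply r' \<mu>"
      using proot by auto
    show "subst_apply r \<sigma> = par_replace (subst_apply l \<sigma>) {[]} (subt_at (subst_apply r \<sigma>))"
      by (simp add: par_replace_root)
  qed
next
  case (pcong ts ss Ps f)
  let ?P = "\<Union>i < length ss. (\<lambda>p. i # p) ` Ps i"
  have D: "par_step R (Ps i) (ss ! i) (ts ! i)" if "i < length ss" for i
    using pcong(2) that by blast
  note D1 = par_stepD(1)[OF D] and D2 = par_stepD(2)[OF D] and D3 = par_stepD(3)[OF D]
    and D4 = par_stepD(4)[OF D]
  have sub: "?P \<subseteq> poss (Fun f ss)"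
  proof
    fix p assume "p \<in> ?P"
    then obtain i q where iq: "i < length ss" "q \<in> Ps i" "p = i # q" by blast
    then show "p \<in> poss (Fun f ss)" using D1[OF iq(1)] by auto
  qed
  have par: "pairwise_parallel ?P"
    unfolding pairwise_parallel_def
  proof (intro ballI impI)
    fix p q assume "p \<in> ?P" "q \<in> ?P" "p \<noteq> q"
    then obtain i p' j q' where pq: "i < length ss" "p' \<in> Ps i" "p = i # p'" "j < length ss" "q' \<in> Ps j" "q = j # q'"
      by blast
    show "parallel_pos p q"
    proof (cases "i = j")
      case True
      then have "parallel_pos p' q'" using pq D2[of i] \<open>p \<noteq> q\<close> unfolding pairwise_parallel_def by blast
      then show ?thesis using pq by (simp add: parallel_Cons)
    qed (simp add: pq parallel_Cons)
  qed
  have red: "\<forall>p\<in>?P. \<exists>(l, r)\<in>R. \<exists>\<mu>. subt_at (Fun f ss) p = subst_apply l \<mu> \<and> subt_at (Fun f ts) p = subst_apply r \<mu>"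
  proof
    fix p assume "p \<in> ?P"
    then obtain i p' where pq: "i < length ss" "p' \<in> Ps i" "p = i # p'" by blast
    then have "\<exists>(l, r)\<in>R. \<exists>\<mu>. subt_at (ss ! i) p' = subst_apply l \<mu> \<and> subt_at (ts ! i) p' = subst_apply r \<mu>"
      using D3 by blast
    then show "\<exists>(l, r)\<in>R. \<exists>\<mu>. subt_at (Fun f ss) p = subst_apply l \<mu> \<and> subt_at (Fun f ts) p = subst_apply r \<mu>"
      using pq by simp
  qed
  have nil: "[] \<notin> ?P" by auto
  have Ps: "i < length ss \<Longrightarrow> {q. i # q \<in> ?P} = Ps i" for i by auto
  have m: "map (\<lambda>i. par_replace (ss ! i) {q. i # q \<in> ?P} (\<lambda>q. subt_at (Fun f ts) (i # q))) [0..<length ss] = ts"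
  proof (rule nth_equalityI)
    show "length (map (\<lambda>i. par_replace (ss ! i) {q. i # q \<in> ?P} (\<lambda>q. subt_at (Fun f ts) (i # q))) [0..<length ss]) = length ts"
      using pcong(1) by simp
    fix i assume "i < length (map (\<lambda>i. par_replace (ss ! i) {q. i # q \<in> ?P} (\<lambda>q. subt_at (Fun f ts) (i # q))) [0..<length ss])"
    then have i: "i < length ss" by simp
    have e: "(\<lambda>q. subt_at (Fun f ts) (i # q)) = subt_at (ts ! i)" by simp
    have "par_replace (ss ! i) (Ps i) (subt_at (ts ! i)) = ts ! i"
      by (rule D4[OF i, symmetric])
    then show "map (\<lambda>i. par_replace (ss ! i) {q. i # q \<in> ?P} (\<lambda>q. subt_at (Fun f ts) (i # q))) [0..<length ss] ! i = ts ! i"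
      using i Ps[OF i] by simp
  qed
  have pr: "par_replace (Fun f ss) ?P (subt_at (Fun f ts)) = Fun f ts"
    unfolding par_replace_Fun[OF nil] m ..
  show ?case unfolding par_step_def using sub par red pr by auto
qed

lemma par_pstep: "par_step R P s t \<Longrightarrow> pstep R P s t"
proof (induction s arbitrary: P t)
  case (Var x)
  note D = par_stepD[OF Var]
  show ?case
  proof (cases "[] \<in> P")
    case True
    then have P: "P = {[]}" using D(1) by auto
    then obtain l r \<mu> where "(l, r) \<in> R" "Var x = subst_apply l \<mu>" "t = subst_apply r \<mu>"
      using D(3)[of "[]"] by auto
    then show ?thesis unfolding P using proot[of l r R \<mu>] by simp
  next
    case False
    then have P: "P = {}" using D(1) by auto
    have "t = Var x" using D(4) unfolding P par_replace_empty .
    then show ?thesis unfolding P by (simp add: pempty)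
  qed
next
  case (Fun f ss)
  note D = par_stepD[OF Fun(2)]
  show ?case
  proof (cases "[] \<in> P")
    case True
    have "p = []" if "p \<in> P" for p
    proof (rule ccontr)
      assume "p \<noteq> []"
      then have "parallel_pos [] p"
        using D(2)[unfolded pairwise_parallel_def, rule_format, OF True that] by simp
      then show False by (simp add: parallel_Nil)
    qed
    then have P: "P = {[]}" using True by auto
    then obtain l r \<mu> where "(l, r) \<in> R" "Fun f ss = subst_apply l \<mu>" "t = subst_apply r \<mu>"
      using D(3)[of "[]"] by auto
    then show ?thesis unfolding P using proot[of l r R \<mu>] by simp
  next
    case False
    define Ps where "Ps i = {q. i # q \<in> P}" for i
    define ts where "ts = map (\<lambda>i. par_replace (ss ! i) (Ps i) (\<lambda>q. subt_at t (i # q))) [0..<length ss]"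
    have t: "t = Fun f ts" apply (subst D(4)) using False by (simp add: par_replace_Fun ts_def Ps_def)
    have len: "length ts = length ss" by (simp add: ts_def)
    have Peq: "P = (\<Union>i < length ss. (\<lambda>p. i # p) ` Ps i)"
    proof
      show "P \<subseteq> (\<Union>i < length ss. (\<lambda>p. i # p) ` Ps i)"
      proof
        fix p assume "p \<in> P"
        then have "p \<in> poss (Fun f ss)" "p \<noteq> []" using D(1) False by auto
        then obtain i q where "p = i # q" "i < length ss" by auto
        then show "p \<in> (\<Union>i < length ss. (\<lambda>p. i # p) ` Ps i)" using \<open>p \<in> P\<close> by (auto simp: Ps_def)
      qed
    qed (auto simp: Ps_def)
    have "pstep R (Ps i) (ss ! i) (ts ! i)" if i: "i < length ss" for i
    proof (rule Fun(1))
      show "ss ! i \<in> set ss" using i by simp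
      have st: "subt_at (ts ! i) = (\<lambda>q. subt_at t (i # q))" using t by auto
      show "par_step R (Ps i) (ss ! i) (ts ! i)"
        unfolding par_step_def
      proof (intro conjI)
        show "Ps i \<subseteq> poss (ss ! i)" using D(1) by (auto simp: Ps_def)
        show "pairwise_parallel (Ps i)" unfolding pairwise_parallel_def Ps_def
        proof (clarify)
          fix p q assume "i # p \<in> P" "i # q \<in> P" "p \<noteq> q"
          then have "parallel_pos (i # p) (i # q)" using D(2) unfolding pairwise_parallel_def by blast
          then show "parallel_pos p q" by (simp add: parallel_Cons)
        qed
        show "\<forall>p\<in>Ps i. \<exists>(l, r)\<in>R. \<exists>\<mu>. subt_at (ss ! i) p = subst_apply l \<mu> \<and> subt_at (ts ! i) p = subst_apply r \<mu>"
        proof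
          fix p assume "p \<in> Ps i"
          then have "i # p \<in> P" by (simp add: Ps_def)
          from D(3)[OF this] have "\<exists>(l, r)\<in>R. \<exists>\<mu>. subt_at (Fun f ss) (i # p) = subst_apply l \<mu> \<and> subt_at t (i # p) = subst_apply r \<mu>" .
          then show "\<exists>(l, r)\<in>R. \<exists>\<mu>. subt_at (ss ! i) p = subst_apply l \<mu> \<and> subt_at (ts ! i) p = subst_apply r \<mu>"
            by (simp add: t)
        qed
        show "ts ! i = par_replace (ss ! i) (Ps i) (subt_at (ts ! i))"
          unfolding st using i by (simp add: ts_def)
      qed
    qed
    then show ?thesis unfolding t Peq by (intro pcong len) auto
  qed
qed

lemma par_step_iff: "par_step R P s t \<longleftrightarrow> pstep R P s t"
  using par_pstep pstep_par by blast


lemma pstep_poss: "pstep R P s t \<Longrightarrow> P \<subseteq> poss s"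
  using par_stepD(1) pstep_par by blast

lemma pstep_parallel: "pstep R P s t \<Longrightarrow> pairwise_parallel P"
  using par_stepD(2) pstep_par by blast

lemma pstep_redex: "pstep R P s t \<Longrightarrow> p \<in> P \<Longrightarrow>
  \<exists>(l, r)\<in>R. \<exists>\<mu>. subt_at s p = subst_apply l \<mu> \<and> subt_at t p = subst_apply r \<mu>"
  by (rule par_stepD(3)[OF pstep_par])

lemma pstep_subst: "pstep R P s t \<Longrightarrow> pstep R P (subst_apply s \<delta>) (subst_apply t \<delta>)"
proof (induction rule: pstep.induct)
  case (pempty s)
  then show ?case by (rule pstep.pempty)
next
  case (proot l r \<sigma>)
  then show ?case unfolding subst_subst by (rule pstep.proot)
next
  case (pcong ts ss Ps f)
  have "pstep R (\<Union>i < length (map (\<lambda>t. subst_apply t \<delta>) ss). (\<lambda>p. i # p) ` Ps i)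
     (Fun f (map (\<lambda>t. subst_apply t \<delta>) ss)) (Fun f (map (\<lambda>t. subst_apply t \<delta>) ts))"
    using pcong by (intro pstep.pcong) auto
  then show ?case by simp
qed

lemma pstep_vars: assumes wf: "wf_trs R" shows "pstep R P s t \<Longrightarrow> vars_term t \<subseteq> vars_term s"
proof (induction rule: pstep.induct)
  case (proot l r \<sigma>)
  then have "vars_term r \<subseteq> vars_term l" using wf unfolding wf_trs_def by blast
  then show ?case unfolding vars_subst by blast
next
  case (pcong ts ss Ps f)
  show ?case
  proof
    fix x assume "x \<in> vars_term (Fun f ts)"
    then obtain i where i: "i < length ts" "x \<in> vars_term (ts ! i)"
      by (auto simp: in_set_conv_nth)
    then have "x \<in> vars_term (ss ! i)" using pcong by auto
    then show "x \<in> vars_term (Fun f ss)" using i pcong(1) by auto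
  qed
qed auto

lemma vars_at_Fun: "n = length ts \<Longrightarrow>
  vars_at (Fun f ts) (\<Union>i < n. (\<lambda>p. i # p) ` Ps i) = (\<Union>i < n. vars_at (ts ! i) (Ps i))"
  unfolding vars_at_def by auto

lemma vars_at_root: "vars_at t {[]} = vars_term t"
  by (simp add: vars_at_def)

lemma vars_at_empty: "vars_at t {} = {}"
  by (simp add: vars_at_def)

lemma vars_at_subset: "P \<subseteq> poss t \<Longrightarrow> vars_at t P \<subseteq> vars_term t"
  unfolding vars_at_def using vars_subt_at by blast

lemma pstep_vars_at: assumes wf: "wf_trs R" shows "pstep R P s t \<Longrightarrow> vars_at t P \<subseteq> vars_at s P"
proof (induction rule: pstep.induct)
  case (proot l r \<sigma>)
  then show ?case unfolding vars_at_root using pstep_vars[OF wf pstep.proot[OF proot(1)]] by blast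
next
  case (pcong ts ss Ps f)
  show ?case unfolding vars_at_Fun[OF refl] vars_at_Fun[OF pcong(1)[symmetric]]
    using pcong(2) by auto
qed (auto simp: vars_at_def)

lemma rstep_ctxt: "(a, b) \<in> rstep R \<Longrightarrow> i < length ss \<Longrightarrow>
  (Fun f (ss[i := a]), Fun f (ss[i := b])) \<in> rstep R"
proof -
  assume ab: "(a, b) \<in> rstep R" and i: "i < length ss"
  then obtain p l r \<sigma> where p: "p \<in> poss a" "(l, r) \<in> R" "subt_at a p = subst_apply l \<sigma>"
    "b = replace_at a p (subst_apply r \<sigma>)"
    unfolding rstep_def by blast
  have "i # p \<in> poss (Fun f (ss[i := a]))" using p i by simp
  moreover have "subt_at (Fun f (ss[i := a])) (i # p) = subst_apply l \<sigma>" using p i by simp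
  moreover have "Fun f (ss[i := b]) = replace_at (Fun f (ss[i := a])) (i # p) (subst_apply r \<sigma>)"
    using p i by simp
  ultimately show ?thesis unfolding rstep_def using p(2) by blast
qed

lemma rsteps_ctxt: "(a, b) \<in> (rstep R)\<^sup>* \<Longrightarrow> i < length ss \<Longrightarrow>
  (Fun f (ss[i := a]), Fun f (ss[i := b])) \<in> (rstep R)\<^sup>*"
proof (induction rule: rtrancl_induct)
  case base then show ?case by simp
next
  case (step y z)
  have "(Fun f (ss[i := y]), Fun f (ss[i := z])) \<in> rstep R"
    by (rule rstep_ctxt[OF step(2) step(4)])
  then show ?case using step(3)[OF step(4)] by (rule rtrancl.rtrancl_into_rtrancl[rotated])
qed

lemma rsteps_args_aux: "list_all2 (\<lambda>a b. (a, b) \<in> (rstep S)\<^sup>*) ss ts \<Longrightarrow>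
  (Fun f (xs @ ss), Fun f (xs @ ts)) \<in> (rstep S)\<^sup>*"
proof (induction ss ts arbitrary: xs rule: list_all2_induct)
  case Nil then show ?case by simp
next
  case (Cons a ss b ts)
  have "(Fun f ((xs @ a # ss)[length xs := a]), Fun f ((xs @ a # ss)[length xs := b])) \<in> (rstep S)\<^sup>*"
    using Cons(1) by (intro rsteps_ctxt) auto
  then have 1: "(Fun f (xs @ a # ss), Fun f (xs @ b # ss)) \<in> (rstep S)\<^sup>*" by simp
  have "(Fun f ((xs @ [b]) @ ss), Fun f ((xs @ [b]) @ ts)) \<in> (rstep S)\<^sup>*" by (rule Cons(3))
  then have 2: "(Fun f (xs @ b # ss), Fun f (xs @ b # ts)) \<in> (rstep S)\<^sup>*" by simp
  show ?case using 1 2 by (meson rtrancl_trans)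
qed

lemma rsteps_args: "length ss = length ts \<Longrightarrow> (\<And>i. i < length ss \<Longrightarrow> (ss ! i, ts ! i) \<in> (rstep R)\<^sup>*) \<Longrightarrow>
  (Fun f ss, Fun f ts) \<in> (rstep R)\<^sup>*"
  using rsteps_args_aux[where xs="[]" and ss=ss and ts=ts and S=R and f=f] by (simp add: list_all2_conv_all_nth)

lemma rstep_root: assumes "(l, r) \<in> R" shows "(subst_apply l \<sigma>, subst_apply r \<sigma>) \<in> rstep R"
proof -
  have "\<exists>p\<in>poss (subst_apply l \<sigma>). \<exists>(l', r')\<in>R. \<exists>\<tau>. subt_at (subst_apply l \<sigma>) p = subst_apply l' \<tau> \<and>
    subst_apply r \<sigma> = replace_at (subst_apply l \<sigma>) p (subst_apply r' \<tau>)"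
    using assms by (intro bexI[of _ "[]"] bexI[of _ "(l, r)"]) auto
  then show ?thesis unfolding rstep_def by simp
qed

lemma pstep_rsteps: "pstep R P s t \<Longrightarrow> (s, t) \<in> (rstep R)\<^sup>*"
proof (induction rule: pstep.induct)
  case (proot l r \<sigma>)
  then show ?case using rstep_root by blast
next
  case (pcong ts ss Ps f)
  then show ?case by (intro rsteps_args) auto
qed auto

lemma pstep_root: "pstep R P s t \<Longrightarrow> [] \<in> P \<Longrightarrow>
  P = {[]} \<and> (\<exists>l r \<mu>. (l, r) \<in> R \<and> s = subst_apply l \<mu> \<and> t = subst_apply r \<mu>)"
  by (induction rule: pstep.induct) auto

lemma pstep_Fun_inv: "pstep R P (Fun f ss) t \<Longrightarrow> [] \<notin> P \<Longrightarrow>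
  \<exists>ts. t = Fun f ts \<and> length ts = length ss \<and>
    (\<forall>i < length ss. pstep R {q. i # q \<in> P} (ss ! i) (ts ! i)) \<and>
    P = (\<Union>i < length ss. (\<lambda>p. i # p) ` {q. i # q \<in> P})"
proof (induction P "Fun f ss" t rule: pstep.induct)
  case pempty
  then show ?case by (auto intro: pstep.pempty)
next
  case (proot l r \<sigma>)
  then show ?case by simp
next
  case (pcong ts Ps)
  have "{q. i # q \<in> (\<Union>i<length ss. (#) i ` Ps i)} = Ps i" if "i < length ss" for i
    using that by auto
  then show ?case using pcong by auto
qed

lemma pstep_Var_inv: assumes wf: "wf_trs R" shows "pstep R P (Var x) t \<Longrightarrow> P = {} \<and> t = Var x"
proof (induction P "Var x :: ('a, 'b) term" t rule: pstep.induct)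
  case (proot l r \<sigma>)
  then have "\<forall>y. l \<noteq> Var y" using wf unfolding wf_trs_def by blast
  then show ?case using proot by (cases l) auto
qed auto

lemma pstep_remove: "pstep R P s t \<Longrightarrow> p \<in> P \<Longrightarrow>
  pstep R (P - {p}) (replace_at s p (subt_at t p)) t"
proof (induction arbitrary: p rule: pstep.induct)
  case (pempty s) then show ?case by simp
next
  case (proot l r \<sigma>)
  then show ?case by (auto intro: pstep.pempty)
next
  case (pcong ts ss Ps f)
  from pcong(3) obtain i p' where ip: "i < length ss" "p' \<in> Ps i" "p = i # p'" by blast
  define Ps' where "Ps' j = (if j = i then Ps i - {p'} else Ps j)" for j
  define ss' where "ss' = ss[i := replace_at (ss ! i) p' (subt_at (ts ! i) p')]"
  have IH: "pstep R (Ps i - {p'}) (replace_at (ss ! i) p' (subt_at (ts ! i) p')) (ts ! i)"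
    using pcong(2) ip by blast
  have "pstep R (\<Union>j < length ss'. (\<lambda>q. j # q) ` Ps' j) (Fun f ss') (Fun f ts)"
  proof (rule pstep.pcong)
    show "length ts = length ss'" using pcong(1) by (simp add: ss'_def)
    show "\<forall>j<length ss'. pstep R (Ps' j) (ss' ! j) (ts ! j)"
      using pcong(2) IH by (auto simp: ss'_def Ps'_def nth_list_update)
  qed
  moreover have "(\<Union>j < length ss'. (\<lambda>q. j # q) ` Ps' j) = (\<Union>i < length ss. (\<lambda>p. i # p) ` Ps i) - {p}"
  proof
    show "(\<Union>j < length ss'. (\<lambda>q. j # q) ` Ps' j) \<subseteq> (\<Union>i < length ss. (\<lambda>p. i # p) ` Ps i) - {p}"
      using ip by (auto simp: ss'_def Ps'_def split: if_splits)
    show "(\<Union>i < length ss. (\<lambda>p. i # p) ` Ps i) - {p} \<subseteq> (\<Union>j < length ss'. (\<lambda>q. j # q) ` Ps' j)"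
    proof
      fix q assume "q \<in> (\<Union>i < length ss. (\<lambda>p. i # p) ` Ps i) - {p}"
      then obtain j q' where "j < length ss" "q' \<in> Ps j" "q = j # q'" "q \<noteq> p" by blast
      then show "q \<in> (\<Union>j < length ss'. (\<lambda>q. j # q) ` Ps' j)"
        using ip by (auto simp: ss'_def Ps'_def)
    qed
  qed
  moreover have "replace_at (Fun f ss) p (subt_at (Fun f ts) p) = Fun f ss'"
    using ip pcong(1) by (simp add: ss'_def)
  ultimately show ?case by simp
qed


lemma map_eq_nth: "map g xs = map g ys \<Longrightarrow> i < length xs \<Longrightarrow> g (xs ! i) = g (ys ! i)"
  by (metis length_map nth_map)

lemma finite_vars: "finite (vars_term t)"
  by (induction t) auto

lemma subst_Var_id[simp]: "subst_apply t Var = t"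
  by (induction t) (auto intro: nth_equalityI simp: map_idI)

lemma exists_renaming:
  assumes inf: "infinite (UNIV :: 'v set)" and A: "finite (A :: 'v set)" and B: "finite (B :: 'v set)"
  shows "\<exists>\<pi>. bij \<pi> \<and> \<pi> ` A \<inter> B = {}"
proof -
  have "infinite (UNIV - (A \<union> B))" using inf A B by (simp add: Diff_infinite_finite)
  from infinite_arbitrarily_large[OF this] obtain D where D: "finite D" "card D = card A" "D \<subseteq> UNIV - (A \<union> B)"
    by blast
  then obtain g where g: "bij_betw g A D" using A finite_same_card_bij by metis
  have gA: "g ` A = D" and ig: "inj_on g A" using g by (auto simp: bij_betw_def)
  have AD: "A \<inter> D = {}" using D by auto
  define \<pi> where "\<pi> x = (if x \<in> A then g x else if x \<in> D then inv_into A g x else x)" for x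
  have inv: "\<pi> (\<pi> x) = x" for x
  proof (cases "x \<in> A")
    case True
    then have "g x \<in> D" "g x \<notin> A" using gA AD by auto
    then show ?thesis using True ig by (simp add: \<pi>_def)
  next
    case False
    show ?thesis
    proof (cases "x \<in> D")
      case True
      then have "inv_into A g x \<in> A" using gA by (metis inv_into_into)
      moreover have "g (inv_into A g x) = x" using True gA by (metis f_inv_into_f)
      ultimately show ?thesis using True False by (simp add: \<pi>_def)
    qed (simp add: \<pi>_def False)
  qed
  have "bij \<pi>" by (rule o_bij[of \<pi>]) (auto simp: inv)
  moreover have "\<pi> ` A \<inter> B = {}" using D gA by (auto simp: \<pi>_def)
  ultimately show ?thesis by blast
qed

lemma linear_Fun_disj: "linear_term (Fun f ts) \<Longrightarrow> i < length ts \<Longrightarrow> j < length ts \<Longrightarrow> i \<noteq> j \<Longrightarrow>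
  vars_term (ts ! i) \<inter> vars_term (ts ! j) = {}"
  by simp

lemma linear_subt: "linear_term t \<Longrightarrow> p \<in> poss t \<Longrightarrow> linear_term (subt_at t p)"
proof (induction t arbitrary: p)
  case (Var x) then show ?case by simp
next
  case (Fun f ts)
  then show ?case by (cases p) (auto dest: nth_mem)
qed

lemma linear_rename: "inj \<pi> \<Longrightarrow> linear_term t \<Longrightarrow> linear_term (subst_apply t (\<lambda>x. Var (\<pi> x)))"
proof (induction t)
  case (Var x) then show ?case by simp
next
  case (Fun f ts)
  have "vars_term (subst_apply (ts ! i) (\<lambda>x. Var (\<pi> x))) = \<pi> ` vars_term (ts ! i)" for i
    by (auto simp: vars_subst)
  then show ?case using Fun by (auto simp: image_Int[OF Fun(2), symmetric])
qed

lemma vars_Fun_nth: "i < length ts \<Longrightarrow> vars_term (ts ! i) \<subseteq> vars_term (Fun f ts)"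
  by (auto dest: nth_mem)

lemma linear_unif:
  assumes "linear_term a" "linear_term b" "vars_term a \<inter> vars_term b = {}"
    "subst_apply a \<tau> = subst_apply b \<tau>"
  shows "\<exists>\<sigma>. subst_apply a \<sigma> = subst_apply b \<sigma> \<and>
     (\<forall>\<tau>'. subst_apply a \<tau>' = subst_apply b \<tau>' \<longrightarrow> subst_compose \<sigma> \<tau>' = \<tau>') \<and>
     (\<forall>y. y \<notin> vars_term a \<union> vars_term b \<longrightarrow> \<sigma> y = Var y)"
  using assms
proof (induction a arbitrary: b \<tau>)
  case (Var x)
  define \<sigma> where "\<sigma> y = (if y = x then b else Var y)" for y
  have b: "subst_apply b \<sigma> = b" using Var(3) by (intro trans[OF subst_agree subst_Var_id]) (auto simp: \<sigma>_def)
  have 2: "subst_compose \<sigma> \<tau>' = \<tau>'" if "subst_apply (Var x) \<tau>' = subst_apply b \<tau>'" for \<tau>'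
    using that by (auto simp: subst_compose_def \<sigma>_def)
  have 1: "subst_apply (Var x) \<sigma> = subst_apply b \<sigma>" unfolding b by (simp add: \<sigma>_def)
  have 3: "\<sigma> y = Var y" if "y \<notin> vars_term (Var x) \<union> vars_term b" for y
    using that by (simp add: \<sigma>_def)
  show ?case using 1 2 3 by blast
next
  case (Fun f as)
  show ?case
  proof (cases b)
    case (Var y)
    define \<sigma> where "\<sigma> z = (if z = y then Fun f as else Var z)" for z
    have a: "subst_apply (Fun f as) \<sigma> = Fun f as" using Fun(4) Var
      by (intro trans[OF subst_agree subst_Var_id]) (auto simp: \<sigma>_def)
    have 2: "subst_compose \<sigma> \<tau>' = \<tau>'" if "subst_apply (Fun f as) \<tau>' = subst_apply b \<tau>'" for \<tau>'
      using that Var by (auto simp: subst_compose_def \<sigma>_def)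
    have 1: "subst_apply (Fun f as) \<sigma> = subst_apply b \<sigma>" unfolding a using Var by (simp add: \<sigma>_def)
    have 3: "\<sigma> z = Var z" if "z \<notin> vars_term (Fun f as) \<union> vars_term b" for z
      using that Var by (simp add: \<sigma>_def)
    show ?thesis using 1 2 3 by blast
  next
    case (Fun g bs)
    note b = this
    have fg: "f = g" and len: "length as = length bs"
      using Fun.prems(4) b by (auto dest: map_eq_imp_length_eq)
    have comp: "subst_apply (as ! i) \<tau> = subst_apply (bs ! i) \<tau>" if "i < length as" for i
      using Fun.prems(4) b that len fg by (auto intro: map_eq_nth)
    let ?n = "length as"
    have disj: "vars_term (Fun f as) \<inter> vars_term (Fun g bs) = {}" using Fun.prems(3) unfolding b .
    define V where "V i = vars_term (as ! i) \<union> vars_term (bs ! i)" for i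
    have "\<exists>\<sigma>. subst_apply (as ! i) \<sigma> = subst_apply (bs ! i) \<sigma> \<and>
     (\<forall>\<tau>'. subst_apply (as ! i) \<tau>' = subst_apply (bs ! i) \<tau>' \<longrightarrow> subst_compose \<sigma> \<tau>' = \<tau>') \<and>
     (\<forall>y. y \<notin> V i \<longrightarrow> \<sigma> y = Var y)" if i: "i < ?n" for i
    proof -
      have "linear_term (as ! i)" using Fun.prems(1) i by (auto dest: nth_mem)
      moreover have "linear_term (bs ! i)" using Fun.prems(2) b i len by (auto dest: nth_mem)
      moreover have "vars_term (as ! i) \<inter> vars_term (bs ! i) = {}"
        using disj i len vars_Fun_nth[of i as f] vars_Fun_nth[of i bs g] by auto
      ultimately show ?thesis using Fun.IH[OF nth_mem[OF i] _ _ _ comp[OF i]] unfolding V_def by blast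
    qed
    then obtain \<sigma>s where \<sigma>s: "\<And>i. i < ?n \<Longrightarrow> subst_apply (as ! i) (\<sigma>s i) = subst_apply (bs ! i) (\<sigma>s i) \<and>
     (\<forall>\<tau>'. subst_apply (as ! i) \<tau>' = subst_apply (bs ! i) \<tau>' \<longrightarrow> subst_compose (\<sigma>s i) \<tau>' = \<tau>') \<and>
     (\<forall>y. y \<notin> V i \<longrightarrow> \<sigma>s i y = Var y)" by metis
    have uniq: "i = j" if "i < ?n" "j < ?n" "z \<in> V i" "z \<in> V j" for i j z
    proof (rule ccontr)
      assume ij: "i \<noteq> j"
      have d1: "vars_term (as ! i) \<inter> vars_term (as ! j) = {}" using Fun.prems(1) that ij by simp
      have d2: "vars_term (bs ! i) \<inter> vars_term (bs ! j) = {}" using Fun.prems(2) b that ij len by simp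
      have d3: "vars_term (as ! k) \<inter> vars_term (bs ! k') = {}" if "k < ?n" "k' < ?n" for k k'
        using disj that len vars_Fun_nth[of k as f] vars_Fun_nth[of k' bs g] by auto
      show False using d1 d2 d3[OF that(1) that(2)] d3[OF that(2) that(1)] that(3,4) unfolding V_def by blast
    qed
    define \<sigma> where "\<sigma> z = (if \<exists>i < ?n. z \<in> V i then \<sigma>s (SOME i. i < ?n \<and> z \<in> V i) z else Var z)" for z
    have \<sigma>V: "\<sigma> z = \<sigma>s i z" if "i < ?n" "z \<in> V i" for i z
    proof -
      have "(SOME i. i < ?n \<and> z \<in> V i) = i"
        using that uniq by (intro some_equality) auto
      then show ?thesis using that by (auto simp: \<sigma>_def)
    qed
    have ag: "subst_apply (as ! i) \<sigma> = subst_apply (as ! i) (\<sigma>s i)"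
        "subst_apply (bs ! i) \<sigma> = subst_apply (bs ! i) (\<sigma>s i)" if "i < ?n" for i
      using \<sigma>V that by (auto intro!: subst_agree simp: V_def)
    have 1: "subst_apply (Fun f as) \<sigma> = subst_apply b \<sigma>"
      using b fg len ag \<sigma>s by (auto intro!: nth_equalityI)
    have 2: "subst_compose \<sigma> \<tau>' = \<tau>'" if u: "subst_apply (Fun f as) \<tau>' = subst_apply b \<tau>'" for \<tau>'
    proof
      fix z
      show "subst_compose \<sigma> \<tau>' z = \<tau>' z"
      proof (cases "\<exists>i < ?n. z \<in> V i")
        case True
        then obtain i where i: "i < ?n" "z \<in> V i" by blast
        have "subst_apply (as ! i) \<tau>' = subst_apply (bs ! i) \<tau>'"
          using u b i len by (auto intro: map_eq_nth)
        then have "subst_compose (\<sigma>s i) \<tau>' = \<tau>'" using \<sigma>s[OF i(1)] by blast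
        then show ?thesis using \<sigma>V[OF i] by (simp add: subst_compose_def fun_eq_iff)
      next
        case False
        then have "\<sigma> z = Var z" unfolding \<sigma>_def by (rule if_not_P)
        then show ?thesis by (simp add: subst_compose_def)
      qed
    qed
    have 3: "\<sigma> y = Var y" if "y \<notin> vars_term (Fun f as) \<union> vars_term b" for y
    proof -
      have "\<not> (\<exists>i < ?n. y \<in> V i)"
        using that len vars_Fun_nth[of _ as f] vars_Fun_nth[of _ bs g] unfolding V_def b by auto
      then show ?thesis unfolding \<sigma>_def by (rule if_not_P)
    qed
    show ?thesis using 1 2 3 by blast
  qed
qed

lemma exists_mgu_linear:
  assumes "linear_term a" "linear_term b" "vars_term a \<inter> vars_term b = {}"
    "subst_apply a \<tau> = subst_apply b \<tau>"
  shows "\<exists>\<sigma>. is_mgu \<sigma> a b \<and> subst_compose \<sigma> \<tau> = \<tau>"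
proof -
  obtain \<sigma> where \<sigma>: "subst_apply a \<sigma> = subst_apply b \<sigma>"
     "\<forall>\<tau>'. subst_apply a \<tau>' = subst_apply b \<tau>' \<longrightarrow> subst_compose \<sigma> \<tau>' = \<tau>'"
    using linear_unif[OF assms] by blast
  then have "is_mgu \<sigma> a b" unfolding is_mgu_def is_unifier_def by metis
  then show ?thesis using \<sigma> assms(4) by blast
qed


lemma rstep_subst: "(a, b) \<in> rstep R \<Longrightarrow> (subst_apply a \<delta>, subst_apply b \<delta>) \<in> rstep R"
proof -
  assume "(a, b) \<in> rstep R"
  then obtain p l r \<sigma> where p: "p \<in> poss a" "(l, r) \<in> R" "subt_at a p = subst_apply l \<sigma>"
    "b = replace_at a p (subst_apply r \<sigma>)"
    unfolding rstep_def by blast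
  have "p \<in> poss (subst_apply a \<delta>)" using p(1) by (rule poss_subst)
  moreover have "subt_at (subst_apply a \<delta>) p = subst_apply l (subst_compose \<sigma> \<delta>)"
    using p by (simp add: subt_at_subst subst_subst)
  moreover have "subst_apply b \<delta> = replace_at (subst_apply a \<delta>) p (subst_apply r (subst_compose \<sigma> \<delta>))"
    using p by (simp add: replace_at_subst subst_subst)
  ultimately show ?thesis unfolding rstep_def using p(2) by blast
qed

lemma rsteps_subst: "(a, b) \<in> (rstep R)\<^sup>* \<Longrightarrow> (subst_apply a \<delta>, subst_apply b \<delta>) \<in> (rstep R)\<^sup>*"
proof (induction rule: rtrancl_induct)
  case base then show ?case by simp
next
  case (step y z)
  then show ?case using rstep_subst[OF step(2), of \<delta>] by (meson rtrancl.rtrancl_into_rtrancl)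
qed

lemma finite_vars_rule: "finite (vars_rule rl)"
  by (simp add: vars_rule_def finite_vars)

lemma is_renaming_Var: "is_renaming Var"
  unfolding is_renaming_def by (intro exI[of _ id]) auto

lemma cp_instance:
  fixes R :: "('f, 'v) trs"
  assumes inf: "infinite (UNIV :: 'v set)" and wf: "wf_trs R" and ll: "left_linear R"
    and lr: "(l, r) \<in> R" and lr1: "(l1, r1) \<in> R" and p: "p \<in> funposs l"
    and ov: "subt_at (subst_apply l \<mu>) p = subst_apply l1 \<mu>1"
  shows "replace_at (subst_apply l \<mu>) p (subst_apply r1 \<mu>1) = subst_apply r \<mu> \<or>
    (\<exists>t' u' \<delta>. critical_pair R t' u' p \<and>
       subst_apply t' \<delta> = replace_at (subst_apply l \<mu>) p (subst_apply r1 \<mu>1) \<and>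
       subst_apply u' \<delta> = subst_apply r \<mu>)"
proof -
  let ?A = "vars_rule (l1, r1)" and ?B = "vars_rule (l, r)"
  obtain \<pi> where \<pi>: "bij \<pi>" "\<pi> ` ?A \<inter> ?B = {}"
    using exists_renaming[OF inf finite_vars_rule finite_vars_rule] by blast
  have inj: "inj \<pi>" using \<pi>(1) by (rule bij_is_inj)
  define \<rho> where "\<rho> = (\<lambda>x. Var (\<pi> x) :: ('f, 'v) term)"
  define l1' where "l1' = subst_apply l1 \<rho>"
  define r1' where "r1' = subst_apply r1 \<rho>"
  have ren: "is_renaming \<rho>" unfolding is_renaming_def \<rho>_def using \<pi>(1) by blast
  have var1: "is_variant (l1', r1') (l1, r1)" unfolding is_variant_def l1'_def r1'_def using ren by auto
  have var2: "is_variant (l, r) (l, r)" unfolding is_variant_def using is_renaming_Var by fastforce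
  have vr: "vars_rule (l1', r1') = \<pi> ` ?A"
    unfolding vars_rule_def l1'_def r1'_def \<rho>_def by (auto simp: vars_subst)
  have disj: "vars_rule (l1', r1') \<inter> vars_rule (l, r) = {}" unfolding vr using \<pi>(2) .
  define \<tau> where "\<tau> y = (if y \<in> \<pi> ` ?A then \<mu>1 (inv \<pi> y) else \<mu> y)" for y
  have \<rho>\<tau>: "subst_compose \<rho> \<tau> x = \<mu>1 x" if "x \<in> ?A" for x
    using that inj by (simp add: subst_compose_def \<rho>_def \<tau>_def)
  have \<tau>l1: "subst_apply l1' \<tau> = subst_apply l1 \<mu>1"
    unfolding l1'_def subst_subst by (rule subst_agree) (simp add: \<rho>\<tau> vars_rule_def)
  have \<tau>r1: "subst_apply r1' \<tau> = subst_apply r1 \<mu>1"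
    unfolding r1'_def subst_subst by (rule subst_agree) (simp add: \<rho>\<tau> vars_rule_def)
  have \<tau>B: "\<tau> x = \<mu> x" if "x \<in> ?B" for x
    using that \<pi>(2) by (auto simp: \<tau>_def)
  have \<tau>l: "subst_apply l \<tau> = subst_apply l \<mu>"
    by (rule subst_agree) (simp add: \<tau>B vars_rule_def)
  have \<tau>r: "subst_apply r \<tau> = subst_apply r \<mu>"
    by (rule subst_agree) (simp add: \<tau>B vars_rule_def)
  have pp: "p \<in> poss l" using p by (rule funposs_poss)
  have unif: "subst_apply l1' \<tau> = subst_apply (subt_at l p) \<tau>"
    unfolding \<tau>l1 subt_at_subst[OF pp, symmetric] \<tau>l ov ..
  have lin_l1: "linear_term l1" using ll lr1 unfolding left_linear_def by blast
  have lin_l: "linear_term l" using ll lr unfolding left_linear_def by blast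
  have lin1: "linear_term l1'" unfolding l1'_def \<rho>_def by (rule linear_rename[OF inj lin_l1])
  have lin2: "linear_term (subt_at l p)" by (rule linear_subt[OF lin_l pp])
  have "vars_term l1' \<subseteq> vars_rule (l1', r1')" by (simp add: vars_rule_def)
  moreover have "vars_term (subt_at l p) \<subseteq> vars_rule (l, r)"
    using vars_subt_at[OF pp] by (auto simp: vars_rule_def)
  ultimately have disj2: "vars_term l1' \<inter> vars_term (subt_at l p) = {}" using disj by blast
  obtain \<sigma> where \<sigma>: "is_mgu \<sigma> l1' (subt_at l p)" "subst_compose \<sigma> \<tau> = \<tau>"
    using exists_mgu_linear[OF lin1 lin2 disj2 unif] by blast
  show ?thesis
  proof (cases "p = [] \<and> is_variant (l1', r1') (l, r)")
    case True
    then obtain \<rho>' where \<rho>': "l1' = subst_apply l \<rho>'" "r1' = subst_apply r \<rho>'"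
      unfolding is_variant_def by auto
    have "subst_apply l (subst_compose \<rho>' \<tau>) = subst_apply l \<mu>"
      using \<tau>l1 ov True unfolding \<rho>'(1) subst_subst by simp
    then have ag: "subst_compose \<rho>' \<tau> x = \<mu> x" if "x \<in> vars_term l" for x
      using subst_eq_agree that by metis
    have "vars_term r \<subseteq> vars_term l" using wf lr unfolding wf_trs_def by blast
    then have "subst_apply r (subst_compose \<rho>' \<tau>) = subst_apply r \<mu>"
      using ag by (intro subst_agree) blast
    then have "subst_apply r1 \<mu>1 = subst_apply r \<mu>"
      using \<tau>r1 unfolding \<rho>'(2) subst_subst by simp
    then show ?thesis using True by simp
  next
    case False
    define t' where "t' = replace_at (subst_apply l \<sigma>) p (subst_apply r1' \<sigma>)"
    define u' where "u' = subst_apply r \<sigma>"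
    have cp: "critical_pair R t' u' p"
      unfolding critical_pair_def
      apply (rule exI[of _ l1'], rule exI[of _ r1'], rule exI[of _ l], rule exI[of _ r], rule exI[of _ \<sigma>])
      using var1 var2 lr lr1 disj p \<sigma>(1) False by (auto simp: t'_def u'_def)
    have "subst_apply t' \<tau> = replace_at (subst_apply (subst_apply l \<sigma>) \<tau>) p (subst_apply (subst_apply r1' \<sigma>) \<tau>)"
      unfolding t'_def by (rule replace_at_subst[OF poss_subst[OF pp]])
    also have "\<dots> = replace_at (subst_apply l \<mu>) p (subst_apply r1 \<mu>1)"
      unfolding subst_subst \<sigma>(2) \<tau>l \<tau>r1 ..
    finally have 1: "subst_apply t' \<tau> = replace_at (subst_apply l \<mu>) p (subst_apply r1 \<mu>1)" .
    have 2: "subst_apply u' \<tau> = subst_apply r \<mu>" unfolding u'_def subst_subst \<sigma>(2) \<tau>r ..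
    show ?thesis using cp 1 2 by blast
  qed
qed

lemma cp_close_nonroot:
  fixes R :: "('f, 'v) trs"
  assumes inf: "infinite (UNIV :: 'v set)" and wf: "wf_trs R" and ll: "left_linear R"
    and apc: "almost_parallel_closed R"
    and lr: "(l, r) \<in> R" and lr1: "(l1, r1) \<in> R" and p: "p \<in> funposs l" and pn: "p \<noteq> []"
    and ov: "subt_at (subst_apply l \<mu>) p = subst_apply l1 \<mu>1"
  shows "\<exists>Q. pstep R Q (replace_at (subst_apply l \<mu>) p (subst_apply r1 \<mu>1)) (subst_apply r \<mu>)"
proof -
  note ci = cp_instance[OF inf wf ll lr lr1 p ov]
  show ?thesis
  proof (cases "replace_at (subst_apply l \<mu>) p (subst_apply r1 \<mu>1) = subst_apply r \<mu>")
    case True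
    then show ?thesis using pstep.pempty by metis
  next
    case False
    then obtain t' u' \<delta> where cp: "critical_pair R t' u' p"
      "subst_apply t' \<delta> = replace_at (subst_apply l \<mu>) p (subst_apply r1 \<mu>1)"
      "subst_apply u' \<delta> = subst_apply r \<mu>" using ci by blast
    then obtain Q where "par_step R Q t' u'" using apc pn unfolding almost_parallel_closed_def by blast
    then have "pstep R Q (subst_apply t' \<delta>) (subst_apply u' \<delta>)" by (intro pstep_subst par_pstep)
    then show ?thesis unfolding cp(2,3) by blast
  qed
qed

lemma cp_close_root:
  fixes R :: "('f, 'v) trs"
  assumes inf: "infinite (UNIV :: 'v set)" and wf: "wf_trs R" and ll: "left_linear R"
    and apc: "almost_parallel_closed R"
    and lr: "(l, r) \<in> R" and lr1: "(l1, r1) \<in> R"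
    and ov: "subst_apply l \<mu> = subst_apply l1 \<mu>1"
  shows "\<exists>v Q. pstep R Q (subst_apply r1 \<mu>1) v \<and> (subst_apply r \<mu>, v) \<in> (rstep R)\<^sup>*"
proof -
  have p: "[] \<in> funposs l" using wf lr unfolding wf_trs_def by (cases l) auto
  note ci = cp_instance[OF inf wf ll lr lr1 p, of \<mu> \<mu>1, simplified, OF ov]
  show ?thesis
  proof (cases "subst_apply r1 \<mu>1 = subst_apply r \<mu>")
    case True
    then show ?thesis using pstep.pempty by (metis rtrancl.rtrancl_refl)
  next
    case False
    then obtain t' u' \<delta> where cp: "critical_pair R t' u' []"
      "subst_apply t' \<delta> = subst_apply r1 \<mu>1"
      "subst_apply u' \<delta> = subst_apply r \<mu>" using ci by blast
    then obtain w Q where w: "par_step R Q t' w" "(u', w) \<in> (rstep R)\<^sup>*"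
      using apc unfolding almost_parallel_closed_def by blast
    then have "pstep R Q (subst_apply t' \<delta>) (subst_apply w \<delta>)" by (intro pstep_subst par_pstep)
    moreover have "(subst_apply u' \<delta>, subst_apply w \<delta>) \<in> (rstep R)\<^sup>*" using w(2) by (rule rsteps_subst)
    ultimately show ?thesis unfolding cp(2,3) by blast
  qed
qed


lemma nonoverlap_decomp:
  assumes wf: "wf_trs R"
  shows "linear_term l \<Longrightarrow> pstep R P (subst_apply l \<mu>) t \<Longrightarrow> P \<inter> funposs l = {} \<Longrightarrow>
    \<exists>\<mu>' Px. t = subst_apply l \<mu>' \<and>
      (\<forall>x\<in>vars_term l. pstep R (Px x) (\<mu> x) (\<mu>' x) \<and> vars_at (\<mu>' x) (Px x) \<subseteq> vars_at t P)"
proof (induction l arbitrary: P t)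
  case (Var x)
  show ?case
    by (rule exI[of _ "\<lambda>_. t"], rule exI[of _ "\<lambda>_. P"]) (use Var in auto)
next
  case (Fun f ls)
  let ?n = "length ls"
  have nil: "[] \<notin> P" using Fun.prems(3) by auto
  obtain ts where ts: "t = Fun f ts" "length ts = length (map (\<lambda>s. subst_apply s \<mu>) ls)"
    "\<forall>i < ?n. pstep R {q. i # q \<in> P} (map (\<lambda>s. subst_apply s \<mu>) ls ! i) (ts ! i)"
    using pstep_Fun_inv[OF Fun.prems(2)[simplified] nil] by auto
  have "\<exists>\<mu>' Px. ts ! i = subst_apply (ls ! i) \<mu>' \<and>
      (\<forall>x\<in>vars_term (ls ! i). pstep R (Px x) (\<mu> x) (\<mu>' x) \<and> vars_at (\<mu>' x) (Px x) \<subseteq> vars_at (ts ! i) {q. i # q \<in> P})"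
    if i: "i < ?n" for i
  proof (rule Fun.IH)
    show "ls ! i \<in> set ls" using i by simp
    show "linear_term (ls ! i)" using Fun.prems(1) i by simp
    show "pstep R {q. i # q \<in> P} (subst_apply (ls ! i) \<mu>) (ts ! i)" using ts(3) i by simp
    show "{q. i # q \<in> P} \<inter> funposs (ls ! i) = {}" using Fun.prems(3) i by auto
  qed
  then obtain M X where MX: "\<And>i. i < ?n \<Longrightarrow> ts ! i = subst_apply (ls ! i) (M i) \<and>
      (\<forall>x\<in>vars_term (ls ! i). pstep R (X i x) (\<mu> x) (M i x) \<and> vars_at (M i x) (X i x) \<subseteq> vars_at (ts ! i) {q. i # q \<in> P})"
    by metis
  have uniq: "i = j" if "i < ?n" "j < ?n" "x \<in> vars_term (ls ! i)" "x \<in> vars_term (ls ! j)" for i j x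
    using Fun.prems(1) that by auto
  define sel where "sel x = (SOME i. i < ?n \<and> x \<in> vars_term (ls ! i))" for x
  have sel: "sel x = i" if "i < ?n" "x \<in> vars_term (ls ! i)" for i x
    unfolding sel_def using that uniq by (intro some_equality) auto
  define \<mu>' where "\<mu>' x = M (sel x) x" for x
  define Px where "Px x = X (sel x) x" for x
  have comp: "ts ! i = subst_apply (ls ! i) \<mu>'" if i: "i < ?n" for i
  proof -
    have "subst_apply (ls ! i) (M i) = subst_apply (ls ! i) \<mu>'"
      using sel[OF i] by (intro subst_agree) (simp add: \<mu>'_def)
    then show ?thesis using MX[OF i] by simp
  qed
  have t: "t = subst_apply (Fun f ls) \<mu>'"
    using ts(1,2) comp by (auto intro!: nth_equalityI)
  have "pstep R (Px x) (\<mu> x) (\<mu>' x) \<and> vars_at (\<mu>' x) (Px x) \<subseteq> vars_at t P"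
    if x: "x \<in> vars_term (Fun f ls)" for x
  proof -
    obtain i where i: "i < ?n" "x \<in> vars_term (ls ! i)" using x by (auto simp: in_set_conv_nth)
    have sub: "vars_at (ts ! i) {q. i # q \<in> P} \<subseteq> vars_at t P"
      unfolding vars_at_def ts(1) by auto
    have e: "\<mu>' x = M i x" "Px x = X i x" using sel[OF i] by (simp_all add: \<mu>'_def Px_def)
    have "pstep R (X i x) (\<mu> x) (M i x) \<and> vars_at (M i x) (X i x) \<subseteq> vars_at (ts ! i) {q. i # q \<in> P}"
      using MX[OF i(1)] i(2) by blast
    then show ?thesis unfolding e using sub by blast
  qed
  then show ?case using t by blast
qed

lemma subst_pstep:
  "(\<forall>x\<in>vars_term r. pstep R (Px x) (\<mu> x) (\<mu>' x)) \<Longrightarrow>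
   \<exists>Q. pstep R Q (subst_apply r \<mu>) (subst_apply r \<mu>') \<and>
     vars_at (subst_apply r \<mu>') Q \<subseteq> (\<Union>x\<in>vars_term r. vars_at (\<mu>' x) (Px x))"
proof (induction r)
  case (Var x)
  then show ?case by auto
next
  case (Fun f rs)
  have "\<exists>Q. pstep R Q (subst_apply (rs ! i) \<mu>) (subst_apply (rs ! i) \<mu>') \<and>
     vars_at (subst_apply (rs ! i) \<mu>') Q \<subseteq> (\<Union>x\<in>vars_term (rs ! i). vars_at (\<mu>' x) (Px x))"
    if i: "i < length rs" for i
    using Fun.IH[OF nth_mem[OF i]] Fun.prems i by (auto dest: nth_mem)
  then obtain Q where Q: "\<And>i. i < length rs \<Longrightarrow> pstep R (Q i) (subst_apply (rs ! i) \<mu>) (subst_apply (rs ! i) \<mu>') \<and>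
     vars_at (subst_apply (rs ! i) \<mu>') (Q i) \<subseteq> (\<Union>x\<in>vars_term (rs ! i). vars_at (\<mu>' x) (Px x))"
    by metis
  have ps: "pstep R (\<Union>i < length (map (\<lambda>s. subst_apply s \<mu>) rs). (\<lambda>p. i # p) ` Q i)
     (Fun f (map (\<lambda>s. subst_apply s \<mu>) rs)) (Fun f (map (\<lambda>s. subst_apply s \<mu>') rs))"
    using Q by (intro pstep.pcong) auto
  have "vars_at (Fun f (map (\<lambda>s. subst_apply s \<mu>') rs)) (\<Union>i < length rs. (\<lambda>p. i # p) ` Q i)
      = (\<Union>i < length rs. vars_at (subst_apply (rs ! i) \<mu>') (Q i))"
    by (subst vars_at_Fun) auto
  also have "\<dots> \<subseteq> (\<Union>x\<in>vars_term (Fun f rs). vars_at (\<mu>' x) (Px x))"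
    using Q by (force dest: nth_mem)
  finally show ?case using ps by auto
qed

lemma parallel_replace:
  "parallel_pos p q \<Longrightarrow> p \<in> poss s \<Longrightarrow>
   (q \<in> poss (replace_at s p x) \<longleftrightarrow> q \<in> poss s) \<and> subt_at (replace_at s p x) q = subt_at s q"
proof (induction s arbitrary: p q)
  case (Var y)
  then show ?case by (simp add: parallel_Nil)
next
  case (Fun f ss)
  obtain i p' where p: "p = i # p'" "i < length ss" "p' \<in> poss (ss ! i)"
    using Fun.prems by (cases p) (auto simp: parallel_Nil)
  obtain j q' where q: "q = j # q'" using Fun.prems(1) by (cases q) (auto simp: parallel_Nil)
  show ?case
  proof (cases "i = j")
    case True
    then have "parallel_pos p' q'" using Fun.prems(1) p q by (simp add: parallel_Cons)
    then show ?thesis using Fun.IH[OF nth_mem[OF p(2)] _ p(3)] p q True by auto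
  next
    case False
    then show ?thesis using p q by (auto simp: nth_list_update)
  qed
qed

lemma vars_replace: "p \<in> poss s \<Longrightarrow> vars_term (replace_at s p x) \<subseteq> vars_term s \<union> vars_term x"
proof (induction s arbitrary: p)
  case (Var y) then show ?case by auto
next
  case (Fun f ss)
  show ?case
  proof (cases p)
    case (Cons i p')
    with Fun.prems have i: "i < length ss" "p' \<in> poss (ss ! i)" by auto
    have "vars_term (replace_at (ss ! i) p' x) \<subseteq> vars_term (ss ! i) \<union> vars_term x"
      using Fun.IH[OF nth_mem[OF i(1)] i(2)] .
    moreover have "vars_term (ss ! i) \<subseteq> vars_term (Fun f ss)" using i(1) by (rule vars_Fun_nth)
    ultimately show ?thesis using i Cons
      by (auto simp: set_conv_nth nth_list_update split: if_splits)
  qed simp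
qed

lemma poss_append: "a \<in> poss s \<Longrightarrow> (a @ r \<in> poss s \<longleftrightarrow> r \<in> poss (subt_at s a)) \<and>
   subt_at s (a @ r) = subt_at (subt_at s a) r"
proof (induction s arbitrary: a)
  case (Var x) then show ?case by simp
next
  case (Fun f ss)
  then show ?case by (cases a) (auto dest: nth_mem)
qed


fun tsize :: "('f, 'v) term \<Rightarrow> nat" where
  "tsize (Var x) = 1"
| "tsize (Fun f ts) = Suc (sum_list (map tsize ts))"

definition ovl :: "pos set \<Rightarrow> pos set \<Rightarrow> pos set" where
  "ovl A B = {q \<in> A \<union> B. \<exists>q' \<in> A \<union> B. strict_prefix q' q}"

definition meas :: "('f, 'v) term \<Rightarrow> pos set \<Rightarrow> pos set \<Rightarrow> nat" where
  "meas s A B = (\<Sum>q \<in> ovl A B. tsize (subt_at s q))"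

lemma tsize_pos: "tsize t > 0"
  by (cases t) auto

lemma meas_sym: "meas s A B = meas s B A"
  unfolding meas_def ovl_def by (simp add: Un_commute)

lemma finite_pos_subset: "A \<subseteq> poss s \<Longrightarrow> finite A"
  using finite_poss finite_subset by blast

lemma pairwise_parallel_subset: "pairwise_parallel A \<Longrightarrow> B \<subseteq> A \<Longrightarrow> pairwise_parallel B"
  unfolding pairwise_parallel_def by blast

lemma strict_prefix_not_parallel: "strict_prefix a b \<Longrightarrow> \<not> parallel_pos a b"
  unfolding parallel_pos_def strict_prefix_def by auto

lemma sum_parallel_le:
  "pairwise_parallel Q \<Longrightarrow> Q \<subseteq> poss t \<Longrightarrow> (\<Sum>q\<in>Q. tsize (subt_at t q)) \<le> tsize t"
proof (induction t arbitrary: Q)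
  case (Var x)
  then have "Q = {} \<or> Q = {[]}" by auto
  then show ?case by auto
next
  case (Fun f ts)
  show ?case
  proof (cases "[] \<in> Q")
    case True
    have "q = []" if "q \<in> Q" for q
    proof (rule ccontr)
      assume "q \<noteq> []"
      then have "parallel_pos [] q"
        using Fun.prems(1)[unfolded pairwise_parallel_def, rule_format, OF True that] by simp
      then show False by (simp add: parallel_Nil)
    qed
    then have "Q = {[]}" using True by auto
    then show ?thesis by simp
  next
    case False
    let ?n = "length ts"
    define Qi where "Qi i = {q. i # q \<in> Q}" for i
    have Qeq: "Q = (\<Union>i\<in>{..<?n}. (\<lambda>q. i # q) ` Qi i)"
    proof
      show "Q \<subseteq> (\<Union>i\<in>{..<?n}. (\<lambda>q. i # q) ` Qi i)"
      proof
        fix q assume q: "q \<in> Q"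
        then have "q \<in> poss (Fun f ts)" "q \<noteq> []" using Fun.prems(2) False by auto
        then obtain i q' where "q = i # q'" "i < ?n" by auto
        then show "q \<in> (\<Union>i\<in>{..<?n}. (\<lambda>q. i # q) ` Qi i)" using q by (auto simp: Qi_def)
      qed
    qed (auto simp: Qi_def)
    have Qi_poss: "Qi i \<subseteq> poss (ts ! i)" if "i < ?n" for i
      using Fun.prems(2) that by (auto simp: Qi_def)
    have Qi_par: "pairwise_parallel (Qi i)" for i
      unfolding pairwise_parallel_def Qi_def
    proof (clarify)
      fix p q assume "i # p \<in> Q" "i # q \<in> Q" "p \<noteq> q"
      then have "parallel_pos (i # p) (i # q)" using Fun.prems(1) unfolding pairwise_parallel_def by blast
      then show "parallel_pos p q" by (simp add: parallel_Cons)
    qed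
    have fin: "finite ((\<lambda>q. i # q) ` Qi i)" if "i < ?n" for i
      using Qi_poss[OF that] finite_pos_subset by blast
    have "(\<Sum>q\<in>Q. tsize (subt_at (Fun f ts) q)) = (\<Sum>i<?n. \<Sum>q\<in>(\<lambda>q. i # q) ` Qi i. tsize (subt_at (Fun f ts) q))"
      unfolding Qeq by (rule sum.UNION_disjoint) (use fin in auto)
    also have "\<dots> = (\<Sum>i<?n. \<Sum>q\<in>Qi i. tsize (subt_at (ts ! i) q))"
      by (rule sum.cong[OF refl]) (simp add: sum.reindex)
    also have "\<dots> \<le> (\<Sum>i<?n. tsize (ts ! i))"
      by (rule sum_mono) (use Fun.IH Qi_par Qi_poss in \<open>auto dest: nth_mem\<close>)
    also have "\<dots> = sum_list (map tsize ts)"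
      by (simp add: sum_list_sum_nth atLeast0LessThan)
    also have "\<dots> \<le> tsize (Fun f ts)" by simp
    finally show ?thesis .
  qed
qed

lemma sum_below_le:
  assumes a: "a \<in> poss s" and B: "pairwise_parallel B" "B \<subseteq> poss s"
  shows "(\<Sum>b\<in>{b \<in> B. strict_prefix a b}. tsize (subt_at s b)) \<le> tsize (subt_at s a)"
proof -
  define Q where "Q = {r. a @ r \<in> B \<and> r \<noteq> []}"
  have eq: "{b \<in> B. strict_prefix a b} = (\<lambda>r. a @ r) ` Q"
    unfolding Q_def by (auto simp: strict_prefix_def prefix_def)
  have "(\<Sum>b\<in>{b \<in> B. strict_prefix a b}. tsize (subt_at s b)) = (\<Sum>r\<in>Q. tsize (subt_at s (a @ r)))"
    unfolding eq by (simp add: sum.reindex inj_on_def)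
  also have "\<dots> = (\<Sum>r\<in>Q. tsize (subt_at (subt_at s a) r))"
    using poss_append[OF a] by simp
  also have "\<dots> \<le> tsize (subt_at s a)"
  proof (rule sum_parallel_le)
    show "pairwise_parallel Q"
      unfolding pairwise_parallel_def Q_def
    proof (clarify)
      fix p q assume "a @ p \<in> B" "a @ q \<in> B" "p \<noteq> q"
      then have "parallel_pos (a @ p) (a @ q)" using B(1) unfolding pairwise_parallel_def by auto
      then show "parallel_pos p q" by (simp add: parallel_pos_def same_prefix_prefix)
    qed
    show "Q \<subseteq> poss (subt_at s a)" using B(2) poss_append[OF a] unfolding Q_def by auto
  qed
  finally show ?thesis .
qed

lemma meas_le:
  assumes A: "pairwise_parallel A" "A \<subseteq> poss s" and B: "pairwise_parallel B" "B \<subseteq> poss s"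
  shows "meas s A B \<le> (\<Sum>a\<in>A. tsize (subt_at s a))"
proof -
  let ?f = "\<lambda>q. tsize (subt_at s q)"
  define S where "S = ovl A B"
  define SA where "SA = S \<inter> A"
  define SB where "SB = S - A"
  have finA: "finite A" and finB: "finite B" using A(2) B(2) finite_pos_subset by blast+
  have finS: "finite S" using finA finB unfolding S_def ovl_def by auto
  have "meas s A B = sum ?f SA + sum ?f SB"
    unfolding meas_def S_def[symmetric] SA_def SB_def
    by (subst sum.union_disjoint[symmetric]) (use finS in \<open>auto intro: sum.cong\<close>)
  have parA: "\<not> strict_prefix x y" if "x \<in> A" "y \<in> A" for x y
    using A(1) that strict_prefix_not_parallel unfolding pairwise_parallel_def
    by (metis strict_prefix_def)
  have parB: "\<not> strict_prefix x y" if "x \<in> B" "y \<in> B" for x y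
    using B(1) that strict_prefix_not_parallel unfolding pairwise_parallel_def
    by (metis strict_prefix_def)
  have claim1: "SB \<subseteq> (\<Union>a\<in>A - SA. {b \<in> B. strict_prefix a b})"
  proof
    fix b assume b: "b \<in> SB"
    then have bB: "b \<in> B" and bA: "b \<notin> A" unfolding SB_def S_def ovl_def by auto
    from b obtain q' where q': "q' \<in> A \<union> B" "strict_prefix q' b" unfolding SB_def S_def ovl_def by auto
    have q'A: "q' \<in> A" using q' bB parB by auto
    have "q' \<notin> SA"
    proof
      assume "q' \<in> SA"
      then obtain q'' where q'': "q'' \<in> A \<union> B" "strict_prefix q'' q'" unfolding SA_def S_def ovl_def by auto
      show False
      proof (cases "q'' \<in> A")
        case True then show False using parA q'A q'' by blast
      next
        case False
        then have "q'' \<in> B" using q'' by auto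
        moreover have "strict_prefix q'' b" using q''(2) q'(2) by (rule prefix_order.less_trans)
        ultimately show False using parB bB by blast
      qed
    qed
    then show "b \<in> (\<Union>a\<in>A - SA. {b \<in> B. strict_prefix a b})" using q'A q' bB by auto
  qed
  have disj: "{b \<in> B. strict_prefix a b} \<inter> {b \<in> B. strict_prefix a' b} = {}"
    if "a \<in> A - SA" "a' \<in> A - SA" "a \<noteq> a'" for a a'
  proof -
    have "parallel_pos a a'" using A(1) that unfolding pairwise_parallel_def by auto
    then show ?thesis unfolding parallel_pos_def
      by (auto simp: strict_prefix_def dest: prefix_same_cases)
  qed
  have finU: "finite (\<Union>a\<in>A - SA. {b \<in> B. strict_prefix a b})" using finA finB by auto
  have "sum ?f SB \<le> sum ?f (\<Union>a\<in>A - SA. {b \<in> B. strict_prefix a b})"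
    by (rule sum_mono2[OF finU claim1]) simp
  also have "\<dots> = (\<Sum>a\<in>A - SA. sum ?f {b \<in> B. strict_prefix a b})"
    by (rule sum.UNION_disjoint) (use finA finB disj in auto)
  also have "\<dots> \<le> (\<Sum>a\<in>A - SA. ?f a)"
    by (rule sum_mono) (use sum_below_le A B in blast)
  finally have SB: "sum ?f SB \<le> (\<Sum>a\<in>A - SA. ?f a)" .
  have "sum ?f A = sum ?f SA + (\<Sum>a\<in>A - SA. ?f a)"
    using finA by (metis SA_def inf_le2 sum.subset_diff add.commute)
  then show ?thesis using SB \<open>meas s A B = sum ?f SA + sum ?f SB\<close> by linarith
qed

lemma meas_root:
  assumes "[] \<notin> A"
  shows "meas s A {[]} = (\<Sum>a\<in>A. tsize (subt_at s a))"
proof -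
  have "ovl A {[]} = A"
    unfolding ovl_def using assms by (auto simp: strict_prefix_def)
  then show ?thesis by (simp add: meas_def)
qed

lemma meas_Fun:
  assumes A: "A \<subseteq> poss (Fun f ss)" and B: "B \<subseteq> poss (Fun f ss)" and i: "i < length ss"
  shows "meas (ss ! i) {q. i # q \<in> A} {q. i # q \<in> B} \<le> meas (Fun f ss) A B"
proof -
  let ?A = "{q. i # q \<in> A}" and ?B = "{q. i # q \<in> B}"
  have sub: "(\<lambda>q. i # q) ` ovl ?A ?B \<subseteq> ovl A B"
  proof
    fix x assume "x \<in> (\<lambda>q. i # q) ` ovl ?A ?B"
    then obtain q q' where q: "x = i # q" "q \<in> ?A \<union> ?B" "q' \<in> ?A \<union> ?B" "strict_prefix q' q"
      unfolding ovl_def by blast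
    then have "i # q' \<in> A \<union> B" "strict_prefix (i # q') (i # q)" "i # q \<in> A \<union> B" by auto
    then show "x \<in> ovl A B" unfolding ovl_def q(1) by blast
  qed
  have fin: "finite (ovl A B)"
    using A B finite_pos_subset unfolding ovl_def by (metis (no_types, lifting) finite_Un mem_Collect_eq rev_finite_subset subsetI)
  have "meas (ss ! i) ?A ?B = (\<Sum>q \<in> (\<lambda>q. i # q) ` ovl ?A ?B. tsize (subt_at (Fun f ss) q))"
    unfolding meas_def by (simp add: sum.reindex)
  also have "\<dots> \<le> meas (Fun f ss) A B"
    unfolding meas_def by (rule sum_mono2[OF fin sub]) simp
  finally show ?thesis .
qed


definition Goal1 :: "('f, 'v) trs \<Rightarrow> ('f, 'v) term \<Rightarrow> pos set \<Rightarrow> ('f, 'v) term \<Rightarrow> pos set \<Rightarrow> ('f, 'v) term \<Rightarrow> bool" where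
  "Goal1 R s A t B u \<longleftrightarrow> (\<exists>v P'. (t, v) \<in> (rstep R)\<^sup>* \<and> pstep R P' u v \<and> vars_at v P' \<subseteq> vars_at s A)"

lemma pstep_poss_tgt: "pstep R P s t \<Longrightarrow> P \<subseteq> poss t"
proof (induction rule: pstep.induct)
  case (pcong ts ss Ps f)
  show ?case
  proof
    fix p assume "p \<in> (\<Union>i<length ss. (\<lambda>p. i # p) ` Ps i)"
    then obtain i q where iq: "i < length ss" "q \<in> Ps i" "p = i # q" by blast
    then have "q \<in> poss (ts ! i)" using pcong(2) by blast
    then show "p \<in> poss (Fun f ts)" using iq pcong(1) by simp
  qed
qed auto

lemma pstep_vars_at_tgt: "pstep R P s t \<Longrightarrow> vars_at t P \<subseteq> vars_term t"
  by (rule vars_at_subset[OF pstep_poss_tgt])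

lemma vars_at_replace_par:
  assumes "pairwise_parallel A" "p \<in> A" "p \<in> poss s"
  shows "vars_at (replace_at s p x) (A - {p}) = vars_at s (A - {p})"
proof -
  have "subt_at (replace_at s p x) a = subt_at s a" if "a \<in> A - {p}" for a
  proof -
    have "parallel_pos p a" using assms(1,2) that unfolding pairwise_parallel_def by auto
    then show ?thesis using parallel_replace assms(3) by blast
  qed
  then show ?thesis unfolding vars_at_def by auto
qed

lemma sum_replace_par:
  assumes "pairwise_parallel A" "p \<in> A" "p \<in> poss s"
  shows "(\<Sum>a\<in>A - {p}. tsize (subt_at (replace_at s p x) a)) = (\<Sum>a\<in>A - {p}. tsize (subt_at s a))"
proof (rule sum.cong[OF refl])
  fix a assume a: "a \<in> A - {p}"
  have "parallel_pos p a" using assms(1,2) a unfolding pairwise_parallel_def by auto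
  then show "tsize (subt_at (replace_at s p x) a) = tsize (subt_at s a)" using parallel_replace assms(3) by metis
qed

lemma meas_decrease:
  assumes A: "pairwise_parallel A" "A \<subseteq> poss s" "[] \<notin> A" and p: "p \<in> A"
    and Q: "pairwise_parallel Q" "Q \<subseteq> poss w1" and w1: "w1 = replace_at s p x"
    and A': "A - {p} \<subseteq> poss w1"
  shows "meas w1 (A - {p}) Q < meas s A {[]}"
proof -
  have pp: "p \<in> poss s" using A(2) p by blast
  have finA: "finite A" using A(2) finite_pos_subset by blast
  have "meas w1 (A - {p}) Q \<le> (\<Sum>a\<in>A - {p}. tsize (subt_at w1 a))"
    by (rule meas_le[OF pairwise_parallel_subset[OF A(1)] A' Q]) auto
  also have "\<dots> = (\<Sum>a\<in>A - {p}. tsize (subt_at s a))"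
    unfolding w1 by (rule sum_replace_par[OF A(1) p pp])
  also have "\<dots> < (\<Sum>a\<in>A. tsize (subt_at s a))"
    using sum.remove[OF finA p, of "\<lambda>a. tsize (subt_at s a)"] tsize_pos[of "subt_at s p"] by linarith
  also have "\<dots> = meas s A {[]}" by (rule meas_root[OF A(3), symmetric])
  finally show ?thesis .
qed

context
  fixes R :: "('f, 'v) trs"
  assumes inf: "infinite (UNIV :: 'v set)" and wf: "wf_trs R" and ll: "left_linear R"
    and apc: "almost_parallel_closed R"
begin

lemma case_root_root:
  assumes lr: "(l, r) \<in> R" and lr': "(l', r') \<in> R"
    and s: "s = subst_apply l \<mu>" "s = subst_apply l' \<mu>'"
    and t: "t = subst_apply r \<mu>" and u: "u = subst_apply r' \<mu>'"
  shows "Goal1 R s {[]} t {[]} u"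
proof -
  obtain v Q where vQ: "pstep R Q (subst_apply r' \<mu>') v" "(subst_apply r \<mu>, v) \<in> (rstep R)\<^sup>*"
    using cp_close_root[OF inf wf ll apc lr lr', of \<mu> \<mu>'] s by metis
  have "vars_at v Q \<subseteq> vars_term v" by (rule pstep_vars_at_tgt[OF vQ(1)])
  also have "\<dots> \<subseteq> vars_term u" using pstep_vars[OF wf vQ(1)] u by simp
  also have "\<dots> \<subseteq> vars_term s"
    using pstep_vars[OF wf pstep.proot[OF lr', of \<mu>']] s u by simp
  finally show ?thesis unfolding Goal1_def using vQ t u vars_at_root by metis
qed

end


context
  fixes R :: "('f, 'v) trs"
  assumes inf: "infinite (UNIV :: 'v set)" and wf: "wf_trs R" and ll: "left_linear R"
    and apc: "almost_parallel_closed R"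
begin

lemma case_nonroot_root:
  assumes lr: "(l, r) \<in> R" and s: "s = subst_apply l \<mu>" and u: "u = subst_apply r \<mu>"
    and A: "pstep R A s t" and nA: "[] \<notin> A"
    and IH: "\<And>s' A' t' B' u'. meas s' A' B' < meas s A {[]} \<Longrightarrow> pstep R A' s' t' \<Longrightarrow> pstep R B' s' u' \<Longrightarrow>
      Goal1 R s' A' t' B' u'"
  shows "Goal1 R s A t {[]} u"
proof (cases "A \<inter> funposs l = {}")
  case True
  have lin: "linear_term l" using ll lr unfolding left_linear_def by blast
  obtain \<mu>' Px where dec: "t = subst_apply l \<mu>'"
    "\<forall>x\<in>vars_term l. pstep R (Px x) (\<mu> x) (\<mu>' x) \<and> vars_at (\<mu>' x) (Px x) \<subseteq> vars_at t A"
    using nonoverlap_decomp[OF wf lin A[unfolded s] True] by blast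
  have rl: "vars_term r \<subseteq> vars_term l" using wf lr unfolding wf_trs_def by blast
  obtain Q where Q: "pstep R Q (subst_apply r \<mu>) (subst_apply r \<mu>')"
    "vars_at (subst_apply r \<mu>') Q \<subseteq> (\<Union>x\<in>vars_term r. vars_at (\<mu>' x) (Px x))"
    using subst_pstep[of r R Px \<mu> \<mu>'] dec(2) rl by blast
  have "vars_at (subst_apply r \<mu>') Q \<subseteq> vars_at t A" using Q(2) dec(2) rl by blast
  also have "\<dots> \<subseteq> vars_at s A" by (rule pstep_vars_at[OF wf A])
  finally have vs: "vars_at (subst_apply r \<mu>') Q \<subseteq> vars_at s A" .
  have "(t, subst_apply r \<mu>') \<in> (rstep R)\<^sup>*" unfolding dec(1) using rstep_root[OF lr] by blast
  then show ?thesis unfolding Goal1_def using Q(1) vs u by blast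
next
  case False
  then obtain p where p: "p \<in> A" "p \<in> funposs l" by blast
  have pn: "p \<noteq> []" using p nA by blast
  obtain l1 r1 \<mu>1 where red: "(l1, r1) \<in> R" "subt_at s p = subst_apply l1 \<mu>1" "subt_at t p = subst_apply r1 \<mu>1"
    using pstep_redex[OF A p(1)] by blast
  define w1 where "w1 = replace_at s p (subt_at t p)"
  obtain Q where Q: "pstep R Q w1 u"
    using cp_close_nonroot[OF inf wf ll apc lr red(1) p(2) pn, of \<mu> \<mu>1] red s u unfolding w1_def by auto
  have A': "pstep R (A - {p}) w1 t" unfolding w1_def by (rule pstep_remove[OF A p(1)])
  have parA: "pairwise_parallel A" by (rule pstep_parallel[OF A])
  have posA: "A \<subseteq> poss s" by (rule pstep_poss[OF A])
  have m: "meas w1 (A - {p}) Q < meas s A {[]}"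
    by (rule meas_decrease[OF parA posA nA p(1) pstep_parallel[OF Q] pstep_poss[OF Q] w1_def pstep_poss[OF A']])
  obtain v P' where v: "(t, v) \<in> (rstep R)\<^sup>*" "pstep R P' u v" "vars_at v P' \<subseteq> vars_at w1 (A - {p})"
    using IH[OF m A' Q] unfolding Goal1_def by blast
  have "vars_at w1 (A - {p}) = vars_at s (A - {p})"
    unfolding w1_def using vars_at_replace_par[OF parA p(1)] posA p(1) by blast
  also have "\<dots> \<subseteq> vars_at s A" unfolding vars_at_def by blast
  finally show ?thesis unfolding Goal1_def using v by blast
qed

lemma case_root_nonroot:
  assumes lr: "(l, r) \<in> R" and s: "s = subst_apply l \<mu>" and t: "t = subst_apply r \<mu>"
    and B: "pstep R B s u" and nB: "[] \<notin> B"
    and IH: "\<And>s' A' t' B' u'. meas s' A' B' < meas s {[]} B \<Longrightarrow> pstep R A' s' t' \<Longrightarrow> pstep R B' s' u' \<Longrightarrow>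
      Goal1 R s' A' t' B' u'"
  shows "Goal1 R s {[]} t B u"
proof (cases "B \<inter> funposs l = {}")
  case True
  have lin: "linear_term l" using ll lr unfolding left_linear_def by blast
  obtain \<mu>' Px where dec: "u = subst_apply l \<mu>'"
    "\<forall>x\<in>vars_term l. pstep R (Px x) (\<mu> x) (\<mu>' x) \<and> vars_at (\<mu>' x) (Px x) \<subseteq> vars_at u B"
    using nonoverlap_decomp[OF wf lin B[unfolded s] True] by blast
  have rl: "vars_term r \<subseteq> vars_term l" using wf lr unfolding wf_trs_def by blast
  obtain Q where Q: "pstep R Q (subst_apply r \<mu>) (subst_apply r \<mu>')"
    using subst_pstep[of r R Px \<mu> \<mu>'] dec(2) rl by blast
  have tv: "(t, subst_apply r \<mu>') \<in> (rstep R)\<^sup>*" unfolding t by (rule pstep_rsteps[OF Q])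
  have uv: "pstep R {[]} u (subst_apply r \<mu>')" unfolding dec(1) by (rule pstep.proot[OF lr])
  have "vars_at (subst_apply r \<mu>') {[]} \<subseteq> vars_term u"
    unfolding vars_at_root by (rule pstep_vars[OF wf uv])
  also have "\<dots> \<subseteq> vars_term s" by (rule pstep_vars[OF wf B])
  finally have "vars_at (subst_apply r \<mu>') {[]} \<subseteq> vars_at s {[]}" unfolding vars_at_root .
  then show ?thesis unfolding Goal1_def using tv uv by blast
next
  case False
  then obtain p where p: "p \<in> B" "p \<in> funposs l" by blast
  have pn: "p \<noteq> []" using p nB by blast
  obtain l1 r1 \<mu>1 where red: "(l1, r1) \<in> R" "subt_at s p = subst_apply l1 \<mu>1" "subt_at u p = subst_apply r1 \<mu>1"
    using pstep_redex[OF B p(1)] by blast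
  define u1 where "u1 = replace_at s p (subt_at u p)"
  obtain Q where Q: "pstep R Q u1 t"
    using cp_close_nonroot[OF inf wf ll apc lr red(1) p(2) pn, of \<mu> \<mu>1] red s t unfolding u1_def by auto
  have B': "pstep R (B - {p}) u1 u" unfolding u1_def by (rule pstep_remove[OF B p(1)])
  have parB: "pairwise_parallel B" by (rule pstep_parallel[OF B])
  have posB: "B \<subseteq> poss s" by (rule pstep_poss[OF B])
  have "meas u1 (B - {p}) Q < meas s B {[]}"
    by (rule meas_decrease[OF parB posB nB p(1) pstep_parallel[OF Q] pstep_poss[OF Q] u1_def pstep_poss[OF B']])
  then have m: "meas u1 Q (B - {p}) < meas s {[]} B" by (simp add: meas_sym)
  obtain v P' where v: "(t, v) \<in> (rstep R)\<^sup>*" "pstep R P' u v" "vars_at v P' \<subseteq> vars_at u1 Q"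
    using IH[OF m Q B'] unfolding Goal1_def by blast
  have pp: "p \<in> poss s" using posB p(1) by blast
  have "vars_at u1 Q \<subseteq> vars_term u1" by (rule vars_at_subset[OF pstep_poss[OF Q]])
  also have "\<dots> \<subseteq> vars_term s \<union> vars_term (subt_at u p)" unfolding u1_def by (rule vars_replace[OF pp])
  also have "\<dots> \<subseteq> vars_term s"
  proof -
    have "vars_term r1 \<subseteq> vars_term l1" using wf red(1) unfolding wf_trs_def by blast
    then have "vars_term (subt_at u p) \<subseteq> vars_term (subt_at s p)"
      unfolding red(2,3) vars_subst by blast
    then show ?thesis using vars_subt_at[OF pp] by blast
  qed
  finally have "vars_at v P' \<subseteq> vars_at s {[]}" unfolding vars_at_root using v(3) by blast
  then show ?thesis unfolding Goal1_def using v by blast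
qed

lemma case_cong:
  assumes A: "pstep R A (Fun f ss) t" and B: "pstep R B (Fun f ss) u" and nA: "[] \<notin> A" and nB: "[] \<notin> B"
    and IH: "\<And>i t' u'. i < length ss \<Longrightarrow> pstep R {q. i # q \<in> A} (ss ! i) t' \<Longrightarrow> pstep R {q. i # q \<in> B} (ss ! i) u' \<Longrightarrow>
      Goal1 R (ss ! i) {q. i # q \<in> A} t' {q. i # q \<in> B} u'"
  shows "Goal1 R (Fun f ss) A t B u"
proof -
  let ?n = "length ss"
  obtain ts where ts: "t = Fun f ts" "length ts = ?n" "\<forall>i < ?n. pstep R {q. i # q \<in> A} (ss ! i) (ts ! i)"
    "A = (\<Union>i < ?n. (\<lambda>p. i # p) ` {q. i # q \<in> A})"
    using pstep_Fun_inv[OF A nA] by blast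
  obtain us where us: "u = Fun f us" "length us = ?n" "\<forall>i < ?n. pstep R {q. i # q \<in> B} (ss ! i) (us ! i)"
    using pstep_Fun_inv[OF B nB] by blast
  have "\<exists>v P'. (ts ! i, v) \<in> (rstep R)\<^sup>* \<and> pstep R P' (us ! i) v \<and> vars_at v P' \<subseteq> vars_at (ss ! i) {q. i # q \<in> A}"
    if i: "i < ?n" for i
  proof -
    have "pstep R {q. i # q \<in> A} (ss ! i) (ts ! i)" using ts(3) i by blast
    moreover have "pstep R {q. i # q \<in> B} (ss ! i) (us ! i)" using us(3) i by blast
    ultimately have "Goal1 R (ss ! i) {q. i # q \<in> A} (ts ! i) {q. i # q \<in> B} (us ! i)" by (rule IH[OF i])
    then show ?thesis unfolding Goal1_def .
  qed
  then obtain V P where VP: "\<And>i. i < ?n \<Longrightarrow> (ts ! i, V i) \<in> (rstep R)\<^sup>* \<and> pstep R (P i) (us ! i) (V i) \<and>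
      vars_at (V i) (P i) \<subseteq> vars_at (ss ! i) {q. i # q \<in> A}" by metis
  define vs where "vs = map V [0..<?n]"
  have 1: "(t, Fun f vs) \<in> (rstep R)\<^sup>*" unfolding ts(1)
    by (rule rsteps_args) (use VP ts(2) in \<open>auto simp: vs_def\<close>)
  have 2: "pstep R (\<Union>i < length us. (\<lambda>p. i # p) ` P i) (Fun f us) (Fun f vs)"
    by (rule pstep.pcong) (use VP us(2) in \<open>auto simp: vs_def\<close>)
  have "vars_at (Fun f vs) (\<Union>i < length us. (\<lambda>p. i # p) ` P i) = (\<Union>i < ?n. vars_at (V i) (P i))"
    using us(2) by (subst vars_at_Fun) (auto simp: vs_def)
  also have "\<dots> \<subseteq> (\<Union>i < ?n. vars_at (ss ! i) {q. i # q \<in> A})" using VP by blast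
  also have "\<dots> = vars_at (Fun f ss) A"
    by (subst (2) ts(4)) (rule vars_at_Fun[symmetric], simp)
  finally show ?thesis unfolding Goal1_def using 1 2 us(1) by blast
qed

lemma elem_tsize: "i < length ss \<Longrightarrow> tsize (ss ! i) < tsize (Fun f ss)"
  using elem_le_sum_list[of i "map tsize ss"] by simp

lemma main_aux:
  "\<forall>s A t B u. (meas s A B, tsize s) = x \<longrightarrow> pstep R A s t \<longrightarrow> pstep R B s u \<longrightarrow> Goal1 R s A t B u"
proof (induction x rule: wf_induct[OF wf_lex_prod[OF wf_less_than wf_less_than]])
  case (1 x)
  show ?case
  proof (intro allI impI)
    fix s A t B u
    assume x: "(meas s A B, tsize s) = x" and A: "pstep R A s t" and B: "pstep R B s u"
    have IH: "Goal1 R s' A' t' B' u'"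
      if "((meas s' A' B', tsize s'), (meas s A B, tsize s)) \<in> less_than <*lex*> less_than"
         "pstep R A' s' t'" "pstep R B' s' u'" for s' A' t' B' u'
      using 1 that x by blast
    have IHm: "Goal1 R s' A' t' B' u'"
      if "meas s' A' B' < meas s A B" "pstep R A' s' t'" "pstep R B' s' u'" for s' A' t' B' u'
      using IH[OF _ that(2,3)] that(1) by simp
    show "Goal1 R s A t B u"
    proof (cases "[] \<in> A")
      case TA: True
      obtain l r \<mu> where lr: "(l, r) \<in> R" "s = subst_apply l \<mu>" "t = subst_apply r \<mu>" and A1: "A = {[]}"
        using pstep_root[OF A TA] by blast
      show ?thesis
      proof (cases "[] \<in> B")
        case TB: True
        obtain l' r' \<mu>' where lr': "(l', r') \<in> R" "s = subst_apply l' \<mu>'" "u = subst_apply r' \<mu>'" and B1: "B = {[]}"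
          using pstep_root[OF B TB] by blast
        show ?thesis unfolding A1 B1 by (rule case_root_root[OF inf wf ll apc lr(1) lr'(1) lr(2) lr'(2) lr(3) lr'(3)])
      next
        case False
        show ?thesis unfolding A1
          by (rule case_root_nonroot[OF lr B False]) (use IHm A1 in auto)
      qed
    next
      case FA: False
      show ?thesis
      proof (cases "[] \<in> B")
        case TB: True
        obtain l' r' \<mu>' where lr': "(l', r') \<in> R" "s = subst_apply l' \<mu>'" "u = subst_apply r' \<mu>'" and B1: "B = {[]}"
          using pstep_root[OF B TB] by blast
        show ?thesis unfolding B1
          by (rule case_nonroot_root[OF lr' A FA]) (use IHm B1 in auto)
      next
        case FB: False
        show ?thesis
        proof (cases s)
          case (Var y)
          have "A = {} \<and> t = Var y" using pstep_Var_inv[OF wf A[unfolded Var]] .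
          moreover have "B = {} \<and> u = Var y" using pstep_Var_inv[OF wf B[unfolded Var]] .
          ultimately have "(t, Var y) \<in> (rstep R)\<^sup>*" "pstep R {} u (Var y)" "vars_at (Var y) {} \<subseteq> vars_at s A"
            by (auto intro: pstep.pempty simp: vars_at_empty)
          then show ?thesis unfolding Goal1_def by blast
        next
          case (Fun f ss)
          show ?thesis unfolding Fun
          proof (rule case_cong[OF A[unfolded Fun] B[unfolded Fun] FA FB])
            fix i t' u' assume i: "i < length ss" and t': "pstep R {q. i # q \<in> A} (ss ! i) t'"
              and u': "pstep R {q. i # q \<in> B} (ss ! i) u'"
            have "meas (ss ! i) {q. i # q \<in> A} {q. i # q \<in> B} \<le> meas s A B"
              unfolding Fun by (rule meas_Fun[OF pstep_poss[OF A[unfolded Fun]] pstep_poss[OF B[unfolded Fun]] i])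
            moreover have "tsize (ss ! i) < tsize s" unfolding Fun by (rule elem_tsize[OF i])
            ultimately have "((meas (ss ! i) {q. i # q \<in> A} {q. i # q \<in> B}, tsize (ss ! i)), (meas s A B, tsize s))
               \<in> less_than <*lex*> less_than" by auto
            then show "Goal1 R (ss ! i) {q. i # q \<in> A} t' {q. i # q \<in> B} u'" using IH t' u' by blast
          qed
        qed
      qed
    qed
  qed
qed

lemma main: "pstep R A s t \<Longrightarrow> pstep R B s u \<Longrightarrow> Goal1 R s A t B u"
  using main_aux by blast

end


theorem lemma4:
  fixes R :: "('f, 'v) trs"
  assumes "infinite (UNIV :: 'v set)"
    and "wf_trs R"
    and "left_linear R"
    and "almost_parallel_closed R"
    and "par_step R P1 s t"
    and "par_step R P2 s u"
  shows "(\<exists>v1 P1'. (t, v1) \<in> (rstep R)\<^sup>* \<and> par_step R P1' u v1 \<and> vars_at v1 P1' \<subseteq> vars_at s P1)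
       \<and> (\<exists>v2 P2'. par_step R P2' t v2 \<and> (u, v2) \<in> (rstep R)\<^sup>* \<and> vars_at v2 P2' \<subseteq> vars_at s P2)"
proof -
  have A: "pstep R P1 s t" and B: "pstep R P2 s u" using assms(5,6) par_pstep by blast+
  have 1: "Goal1 R s P1 t P2 u" by (rule main[OF assms(1-4) A B])
  have 2: "Goal1 R s P2 u P1 t" by (rule main[OF assms(1-4) B A])
  show ?thesis using 1 2 unfolding Goal1_def par_step_iff by blast
qed


end
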